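(* Let $\mathcal L$ be a differential Seely category with comonad $(!,\mathbf d,\mathbf p)$ and let $\mathcal L_!$ be its co-Kleisli category. Then the canonical linear-non-linear adjunction between $\mathcal L_!$ and $\mathcal L$ (with $\mathcal F:\mathcal L_!\to\mathcal L$, $A\mapsto !A$, $f\mapsto\mathbf p_A;!f$ for $f:!A\to B$, and $\mathcal U:\mathcal L\to\mathcal L_!$, $A\mapsto A$, $u\mapsto\mathbf d_A;u$) is a generalised differential Seely category, i.e. it admits a functor $\mathcal T:\mathcal L_!\to LS(\mathcal L_!)$ satisfying axioms (t.1), (t.2), (t.3).
   Context: Composition is diagrammatic ($f;g$ = $f$ then $g$); monoidal categories are strict. Differential Seely category: an additive symmetric monoidal category $(\mathcal L,\otimes,1)$ (enriched over commutative monoids with $\otimes$ bilinear and preserving $0$) with finite products, which are biproducts $\oplus$ (projections $\pi_i$, injections $\iota_i$), and a comonad $(!,\mathbf d,\mathbf p)$ with Seely isomorphisms $!(A\oplus B)\cong!A\otimes!B$, $!0\cong1$ (so the co-Kleisli category $\mathcal L_!$ is cartesian, with products $\oplus$, and the co-Kleisli adjunction is a symmetric monoidal adjunction; each $!A$ is a commutative comonoid with contraction $\mathbf c_A$ and weakening $\mathbf w_A$), together with a natural $\partial_A:!A\otimes A\to!A$ satisfying: $\partial_A;\mathbf w_A=0$; $\partial_A;\mathbf c_A=(\mathbf c_A\otimes\mathrm{id}_A);[(\mathrm{id}_{!A}\otimes\partial_A)+(\mathrm{id}_{!A}\otimes\sigma_{!A,A};\partial_A\otimes\mathrm{id}_{!A})]$;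 $\partial_A;\mathbf d_A=\mathbf w_A\otimes\mathrm{id}_A$; $\partial_A;\mathbf p_A=(\mathbf c_A\otimes\mathrm{id}_A);(\mathbf p_A\otimes\partial_A);\partial_{!A}$; $(\mathrm{id}_{!A}\otimes\sigma_{A,A});(\partial_A\otimes\mathrm{id}_A);\partial_A=(\partial_A\otimes\mathrm{id}_A);\partial_A$. General notions, for an LNL adjunction $\mathcal F\dashv\mathcal U$, $\mathcal F:\mathscr C\to\mathcal L$, between a cartesian $(\mathscr C,\times,I)$ and symmetric monoidal $(\mathcal L,\otimes,1)$, with $\mathcal U$ lax monoidal via $n_{A,B}:\mathcal U(A)\times\mathcal U(B)\to\mathcal U(A\otimes B)$, $\mathcal F$ strong monoidal via $m_{X,Y}:\mathcal F(X)\otimes\mathcal F(Y)\to\mathcal F(X\times Y)$, $m_1:1\to\mathcal F(I)$, unit $\eta$: $\mathbf c_X:=\mathcal F(\Delta_X);m_{X,X}^{-1}$, $\mathbf w_X:=\mathcal F(t_X);m_1^{-1}$ ($t_X$ terminal). $LS(\mathscr C)$ has objects $(X,A)$ ($X\in\mathscr C$, $A\in\mathcal L$), morphisms $(f,u):(X,A)\to(Y,B)$ with $f:X\to Y$, $u:\mathcal F(X)\otimes A\to B$, composition $(f,u);(g,v)=(f;g,(\mathbf c_X\otimes\mathrm{id}_A);(\mathcal F(f)\otimes u);v)$, identity $(\mathrm{id}_X,\mathbf w_X\otimes\mathrm{id}_A)$, projection $\mathbf{ls}(f,u)=f$; when $\mathcal L$ has biproducts, $LS(\mathscr C)$ has products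 $(X,A)\times(Y,B)=(X\times Y,A\oplus B)$ with projections $(\pi_i,\mathbf w_{X\times Y}\otimes\pi_i)$. Axioms for $\mathcal T:\mathscr C\to LS(\mathscr C)$: (t.1) $\mathbf{ls}\circ\mathcal T=\mathrm{id}$ (so $\mathcal T(X)=(X,\lambda(X))$) and $\varphi_{X,Y}:=\langle\mathcal T(\pi_1),\mathcal T(\pi_2)\rangle:\mathcal T(X\times Y)\to(X\times Y,\lambda(X)\oplus\lambda(Y))$ is an isomorphism; (t.2) $\mathcal T(\mathcal U(A))=(\mathcal U(A),A)$; (t.3) with $i^{X,Y}_2:=(\mathrm{id}_{X\times Y},\mathbf w_{X\times Y}\otimes\iota_2);\varphi_{X,Y}^{-1}$, $⦃(f,u)⦄:=\langle\pi_1;f,(\eta_X\times\mathrm{id}_{\mathcal U(A)});n_{\mathcal F(X),A};\mathcal U(u)\rangle:X\times\mathcal U(A)\to Y\times\mathcal U(B)$, $W(f,u):=(⦃(f,u)⦄,(\mathcal F(\pi_1)\otimes\mathrm{id}_A);u):(X\times\mathcal U(A),A)\to(Y\times\mathcal U(B),B)$: $W(f,u);i^{Y,\mathcal U(B)}_2=i^{X,\mathcal U(A)}_2;\mathcal T(⦃(f,u)⦄)$ for all $(f,u):(X,A)\to(Y,B)$. A GDSC is such an LNL with $\mathcal L$ additive with finite products and such a $\mathcal T$. *)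

theory Defs
  imports Main
begin

(* Composition is diagrammatic: L_cmp C f g = f ; g  (first f, then g). *)

record ('o, 'a) dsc_data =
  L_ar   :: "'a set"
  L_dom  :: "'a \<Rightarrow> 'o"
  L_cod  :: "'a \<Rightarrow> 'o"
  L_id   :: "'o \<Rightarrow> 'a"
  L_cmp  :: "'a \<Rightarrow> 'a \<Rightarrow> 'a"
  L_zero :: "'o \<Rightarrow> 'o \<Rightarrow> 'a"
  L_plus :: "'a \<Rightarrow> 'a \<Rightarrow> 'a"
  L_ten  :: "'o \<Rightarrow> 'o \<Rightarrow> 'o"
  L_tenm :: "'a \<Rightarrow> 'a \<Rightarrow> 'a"
  L_one  :: "'o"
  L_sym  :: "'o \<Rightarrow> 'o \<Rightarrow> 'a"
  L_bp   :: "'o \<Rightarrow> 'o \<Rightarrow> 'o"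
  L_pr1  :: "'o \<Rightarrow> 'o \<Rightarrow> 'a"
  L_pr2  :: "'o \<Rightarrow> 'o \<Rightarrow> 'a"
  L_in1  :: "'o \<Rightarrow> 'o \<Rightarrow> 'a"
  L_in2  :: "'o \<Rightarrow> 'o \<Rightarrow> 'a"
  L_zo   :: "'o"
  L_bang :: "'o \<Rightarrow> 'o"
  L_bangm :: "'a \<Rightarrow> 'a"
  L_der  :: "'o \<Rightarrow> 'a"
  L_prm  :: "'o \<Rightarrow> 'a"
  L_sly  :: "'o \<Rightarrow> 'o \<Rightarrow> 'a"
  L_sly0 :: "'a"
  L_dif  :: "'o \<Rightarrow> 'a"

definition hom :: "('o,'a) dsc_data \<Rightarrow> 'o \<Rightarrow> 'o \<Rightarrow> 'a set" where
  "hom C A B = {f \<in> L_ar C. L_dom C f = A \<and> L_cod C f = B}"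

definition is_iso :: "('o,'a) dsc_data \<Rightarrow> 'o \<Rightarrow> 'o \<Rightarrow> 'a \<Rightarrow> bool" where
  "is_iso C A B f \<longleftrightarrow> f \<in> hom C A B \<and>
     (\<exists>g \<in> hom C B A. L_cmp C f g = L_id C A \<and> L_cmp C g f = L_id C B)"

definition inv_of :: "('o,'a) dsc_data \<Rightarrow> 'o \<Rightarrow> 'o \<Rightarrow> 'a \<Rightarrow> 'a" where
  "inv_of C A B f = (THE g. g \<in> hom C B A \<and> L_cmp C f g = L_id C A \<and> L_cmp C g f = L_id C B)"

section \<open>The co-Kleisli category L_! (arrows X \<rightarrow> Y are L-arrows !X \<rightarrow> Y)\<close>

definition kid :: "('o,'a) dsc_data \<Rightarrow> 'o \<Rightarrow> 'a" where
  "kid C X = L_der C X"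

definition kcomp :: "('o,'a) dsc_data \<Rightarrow> 'o \<Rightarrow> 'a \<Rightarrow> 'a \<Rightarrow> 'a" where
  "kcomp C X f g = L_cmp C (L_cmp C (L_prm C X) (L_bangm C f)) g"

definition Fm :: "('o,'a) dsc_data \<Rightarrow> 'o \<Rightarrow> 'a \<Rightarrow> 'a" where
  "Fm C X f = L_cmp C (L_prm C X) (L_bangm C f)"

definition Um :: "('o,'a) dsc_data \<Rightarrow> 'o \<Rightarrow> 'a \<Rightarrow> 'a" where
  "Um C A u = L_cmp C (L_der C A) u"

definition kpi1 :: "('o,'a) dsc_data \<Rightarrow> 'o \<Rightarrow> 'o \<Rightarrow> 'a" where
  "kpi1 C X Y = L_cmp C (L_der C (L_bp C X Y)) (L_pr1 C X Y)"

definition kpi2 :: "('o,'a) dsc_data \<Rightarrow> 'o \<Rightarrow> 'o \<Rightarrow> 'a" where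
  "kpi2 C X Y = L_cmp C (L_der C (L_bp C X Y)) (L_pr2 C X Y)"

definition kpair :: "('o,'a) dsc_data \<Rightarrow> 'o \<Rightarrow> 'o \<Rightarrow> 'a \<Rightarrow> 'a \<Rightarrow> 'a" where
  "kpair C Y W f g = L_plus C (L_cmp C f (L_in1 C Y W)) (L_cmp C g (L_in2 C Y W))"

definition kprod :: "('o,'a) dsc_data \<Rightarrow> 'o \<Rightarrow> 'o \<Rightarrow> 'o \<Rightarrow> 'o \<Rightarrow> 'a \<Rightarrow> 'a \<Rightarrow> 'a" where
  "kprod C X Y X' Y' f g =
     kpair C X' Y' (kcomp C (L_bp C X Y) (kpi1 C X Y) f) (kcomp C (L_bp C X Y) (kpi2 C X Y) g)"

definition kterm :: "('o,'a) dsc_data \<Rightarrow> 'o \<Rightarrow> 'a" where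
  "kterm C X = L_zero C (L_bang C X) (L_zo C)"

definition kdiag :: "('o,'a) dsc_data \<Rightarrow> 'o \<Rightarrow> 'a" where
  "kdiag C X = kpair C X X (kid C X) (kid C X)"

definition kassoc :: "('o,'a) dsc_data \<Rightarrow> 'o \<Rightarrow> 'o \<Rightarrow> 'o \<Rightarrow> 'a" where
  "kassoc C X Y Z =
     (let P = L_bp C (L_bp C X Y) Z in
      kpair C X (L_bp C Y Z)
        (kcomp C P (kpi1 C (L_bp C X Y) Z) (kpi1 C X Y))
        (kpair C Y Z (kcomp C P (kpi1 C (L_bp C X Y) Z) (kpi2 C X Y)) (kpi2 C (L_bp C X Y) Z)))"

definition kswap :: "('o,'a) dsc_data \<Rightarrow> 'o \<Rightarrow> 'o \<Rightarrow> 'a" where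
  "kswap C X Y = kpair C Y X (kpi2 C X Y) (kpi1 C X Y)"

definition contr :: "('o,'a) dsc_data \<Rightarrow> 'o \<Rightarrow> 'a" where
  "contr C X = L_cmp C (Fm C X (kdiag C X))
      (inv_of C (L_ten C (L_bang C X) (L_bang C X)) (L_bang C (L_bp C X X)) (L_sly C X X))"

definition weak :: "('o,'a) dsc_data \<Rightarrow> 'o \<Rightarrow> 'a" where
  "weak C X = L_cmp C (Fm C X (kterm C X)) (inv_of C (L_one C) (L_bang C (L_zo C)) (L_sly0 C))"

definition category_ax :: "('o,'a) dsc_data \<Rightarrow> bool" where
  "category_ax C \<longleftrightarrow>
    (\<forall>A. L_id C A \<in> hom C A A) \<and>
    (\<forall>A B D f g. f \<in> hom C A B \<longrightarrow> g \<in> hom C B D \<longrightarrow> L_cmp C f g \<in> hom C A D) \<and>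
    (\<forall>A B f. f \<in> hom C A B \<longrightarrow> L_cmp C (L_id C A) f = f \<and> L_cmp C f (L_id C B) = f) \<and>
    (\<forall>A B D E f g h. f \<in> hom C A B \<longrightarrow> g \<in> hom C B D \<longrightarrow> h \<in> hom C D E \<longrightarrow>
        L_cmp C (L_cmp C f g) h = L_cmp C f (L_cmp C g h))"

definition additive_ax :: "('o,'a) dsc_data \<Rightarrow> bool" where
  "additive_ax C \<longleftrightarrow>
    (\<forall>A B. L_zero C A B \<in> hom C A B) \<and>
    (\<forall>A B f g. f \<in> hom C A B \<longrightarrow> g \<in> hom C A B \<longrightarrow> L_plus C f g \<in> hom C A B) \<and>
    (\<forall>A B f g h. f \<in> hom C A B \<longrightarrow> g \<in> hom C A B \<longrightarrow> h \<in> hom C A B \<longrightarrow>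
        L_plus C (L_plus C f g) h = L_plus C f (L_plus C g h)) \<and>
    (\<forall>A B f g. f \<in> hom C A B \<longrightarrow> g \<in> hom C A B \<longrightarrow> L_plus C f g = L_plus C g f) \<and>
    (\<forall>A B f. f \<in> hom C A B \<longrightarrow> L_plus C f (L_zero C A B) = f) \<and>
    (\<forall>A B D f g h. f \<in> hom C A B \<longrightarrow> g \<in> hom C A B \<longrightarrow> h \<in> hom C B D \<longrightarrow>
        L_cmp C (L_plus C f g) h = L_plus C (L_cmp C f h) (L_cmp C g h)) \<and>
    (\<forall>A B D f g h. h \<in> hom C A B \<longrightarrow> f \<in> hom C B D \<longrightarrow> g \<in> hom C B D \<longrightarrow>
        L_cmp C h (L_plus C f g) = L_plus C (L_cmp C h f) (L_cmp C h g)) \<and>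
    (\<forall>A B D h. h \<in> hom C B D \<longrightarrow> L_cmp C (L_zero C A B) h = L_zero C A D) \<and>
    (\<forall>A B D h. h \<in> hom C A B \<longrightarrow> L_cmp C h (L_zero C B D) = L_zero C A D)"

text \<open>Strict symmetric monoidal structure, with \<otimes> bilinear and preserving 0.\<close>
definition monoidal_ax :: "('o,'a) dsc_data \<Rightarrow> bool" where
  "monoidal_ax C \<longleftrightarrow>
    (\<forall>A B A' B' f g. f \<in> hom C A B \<longrightarrow> g \<in> hom C A' B' \<longrightarrow>
        L_tenm C f g \<in> hom C (L_ten C A A') (L_ten C B B')) \<and>
    (\<forall>A B. L_tenm C (L_id C A) (L_id C B) = L_id C (L_ten C A B)) \<and>
    (\<forall>A B D A' B' D' f g f' g'. f \<in> hom C A B \<longrightarrow> g \<in> hom C B D \<longrightarrow>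
        f' \<in> hom C A' B' \<longrightarrow> g' \<in> hom C B' D' \<longrightarrow>
        L_tenm C (L_cmp C f g) (L_cmp C f' g') = L_cmp C (L_tenm C f f') (L_tenm C g g')) \<and>
    (\<forall>A B D. L_ten C (L_ten C A B) D = L_ten C A (L_ten C B D)) \<and>
    (\<forall>A. L_ten C (L_one C) A = A \<and> L_ten C A (L_one C) = A) \<and>
    (\<forall>A B A' B' A'' B'' f g h. f \<in> hom C A B \<longrightarrow> g \<in> hom C A' B' \<longrightarrow> h \<in> hom C A'' B'' \<longrightarrow>
        L_tenm C (L_tenm C f g) h = L_tenm C f (L_tenm C g h)) \<and>
    (\<forall>A B f. f \<in> hom C A B \<longrightarrow>
        L_tenm C (L_id C (L_one C)) f = f \<and> L_tenm C f (L_id C (L_one C)) = f) \<and>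
    (\<forall>A B. L_sym C A B \<in> hom C (L_ten C A B) (L_ten C B A)) \<and>
    (\<forall>A B A' B' f g. f \<in> hom C A B \<longrightarrow> g \<in> hom C A' B' \<longrightarrow>
        L_cmp C (L_tenm C f g) (L_sym C B B') = L_cmp C (L_sym C A A') (L_tenm C g f)) \<and>
    (\<forall>A B. L_cmp C (L_sym C A B) (L_sym C B A) = L_id C (L_ten C A B)) \<and>
    (\<forall>A B D. L_sym C A (L_ten C B D) =
        L_cmp C (L_tenm C (L_sym C A B) (L_id C D)) (L_tenm C (L_id C B) (L_sym C A D))) \<and>
    (\<forall>A B A' B' f g h. f \<in> hom C A B \<longrightarrow> g \<in> hom C A B \<longrightarrow> h \<in> hom C A' B' \<longrightarrow>
        L_tenm C (L_plus C f g) h = L_plus C (L_tenm C f h) (L_tenm C g h) \<and>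
        L_tenm C h (L_plus C f g) = L_plus C (L_tenm C h f) (L_tenm C h g)) \<and>
    (\<forall>A B A' B' h. h \<in> hom C A' B' \<longrightarrow>
        L_tenm C (L_zero C A B) h = L_zero C (L_ten C A A') (L_ten C B B') \<and>
        L_tenm C h (L_zero C A B) = L_zero C (L_ten C A' A) (L_ten C B' B))"

definition biproduct_ax :: "('o,'a) dsc_data \<Rightarrow> bool" where
  "biproduct_ax C \<longleftrightarrow>
    (\<forall>A B. L_pr1 C A B \<in> hom C (L_bp C A B) A \<and> L_pr2 C A B \<in> hom C (L_bp C A B) B \<and>
           L_in1 C A B \<in> hom C A (L_bp C A B) \<and> L_in2 C A B \<in> hom C B (L_bp C A B)) \<and>
    (\<forall>A B. L_cmp C (L_in1 C A B) (L_pr1 C A B) = L_id C A \<and>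
           L_cmp C (L_in1 C A B) (L_pr2 C A B) = L_zero C A B \<and>
           L_cmp C (L_in2 C A B) (L_pr1 C A B) = L_zero C B A \<and>
           L_cmp C (L_in2 C A B) (L_pr2 C A B) = L_id C B \<and>
           L_plus C (L_cmp C (L_pr1 C A B) (L_in1 C A B)) (L_cmp C (L_pr2 C A B) (L_in2 C A B))
             = L_id C (L_bp C A B)) \<and>
    L_id C (L_zo C) = L_zero C (L_zo C) (L_zo C)"

definition comonad_ax :: "('o,'a) dsc_data \<Rightarrow> bool" where
  "comonad_ax C \<longleftrightarrow>
    (\<forall>A B f. f \<in> hom C A B \<longrightarrow> L_bangm C f \<in> hom C (L_bang C A) (L_bang C B)) \<and>
    (\<forall>A. L_bangm C (L_id C A) = L_id C (L_bang C A)) \<and>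
    (\<forall>A B D f g. f \<in> hom C A B \<longrightarrow> g \<in> hom C B D \<longrightarrow>
        L_bangm C (L_cmp C f g) = L_cmp C (L_bangm C f) (L_bangm C g)) \<and>
    (\<forall>A. L_der C A \<in> hom C (L_bang C A) A \<and>
         L_prm C A \<in> hom C (L_bang C A) (L_bang C (L_bang C A))) \<and>
    (\<forall>A B f. f \<in> hom C A B \<longrightarrow>
        L_cmp C (L_bangm C f) (L_der C B) = L_cmp C (L_der C A) f \<and>
        L_cmp C (L_prm C A) (L_bangm C (L_bangm C f)) = L_cmp C (L_bangm C f) (L_prm C B)) \<and>
    (\<forall>A. L_cmp C (L_prm C A) (L_der C (L_bang C A)) = L_id C (L_bang C A) \<and>
         L_cmp C (L_prm C A) (L_bangm C (L_der C A)) = L_id C (L_bang C A) \<and>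
         L_cmp C (L_prm C A) (L_prm C (L_bang C A)) = L_cmp C (L_prm C A) (L_bangm C (L_prm C A)))"

text \<open>Seely isomorphisms, making F : (L_!, \<oplus>, 0) \<rightarrow> (L, \<otimes>, 1) strong symmetric monoidal
  (equivalently, by doctrinal adjunction, the co-Kleisli adjunction symmetric monoidal).\<close>
definition seely_ax :: "('o,'a) dsc_data \<Rightarrow> bool" where
  "seely_ax C \<longleftrightarrow>
    (\<forall>X Y. is_iso C (L_ten C (L_bang C X) (L_bang C Y)) (L_bang C (L_bp C X Y)) (L_sly C X Y)) \<and>
    is_iso C (L_one C) (L_bang C (L_zo C)) (L_sly0 C) \<and>
    (\<forall>X Y X' Y' f g. f \<in> hom C (L_bang C X) X' \<longrightarrow> g \<in> hom C (L_bang C Y) Y' \<longrightarrow>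
        L_cmp C (L_tenm C (Fm C X f) (Fm C Y g)) (L_sly C X' Y') =
        L_cmp C (L_sly C X Y) (Fm C (L_bp C X Y) (kprod C X Y X' Y' f g))) \<and>
    (\<forall>X Y Z.
        L_cmp C (L_cmp C (L_tenm C (L_sly C X Y) (L_id C (L_bang C Z))) (L_sly C (L_bp C X Y) Z))
          (Fm C (L_bp C (L_bp C X Y) Z) (kassoc C X Y Z)) =
        L_cmp C (L_tenm C (L_id C (L_bang C X)) (L_sly C Y Z)) (L_sly C X (L_bp C Y Z))) \<and>
    (\<forall>X. L_cmp C (L_cmp C (L_tenm C (L_sly0 C) (L_id C (L_bang C X))) (L_sly C (L_zo C) X))
          (Fm C (L_bp C (L_zo C) X) (kpi2 C (L_zo C) X)) = L_id C (L_bang C X)) \<and>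
    (\<forall>X. L_cmp C (L_cmp C (L_tenm C (L_id C (L_bang C X)) (L_sly0 C)) (L_sly C X (L_zo C)))
          (Fm C (L_bp C X (L_zo C)) (kpi1 C X (L_zo C))) = L_id C (L_bang C X)) \<and>
    (\<forall>X Y. L_cmp C (L_sym C (L_bang C X) (L_bang C Y)) (L_sly C Y X) =
           L_cmp C (L_sly C X Y) (Fm C (L_bp C X Y) (kswap C X Y)))"

definition differential_ax :: "('o,'a) dsc_data \<Rightarrow> bool" where
  "differential_ax C \<longleftrightarrow>
    (\<forall>A. L_dif C A \<in> hom C (L_ten C (L_bang C A) A) (L_bang C A)) \<and>
    (\<forall>A B f. f \<in> hom C A B \<longrightarrow>
        L_cmp C (L_dif C A) (L_bangm C f) = L_cmp C (L_tenm C (L_bangm C f) f) (L_dif C B)) \<and>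
    (\<forall>A. L_cmp C (L_dif C A) (weak C A) = L_zero C (L_ten C (L_bang C A) A) (L_one C)) \<and>
    (\<forall>A. L_cmp C (L_dif C A) (contr C A) =
        L_cmp C (L_tenm C (contr C A) (L_id C A))
          (L_plus C (L_tenm C (L_id C (L_bang C A)) (L_dif C A))
             (L_cmp C (L_tenm C (L_id C (L_bang C A)) (L_sym C (L_bang C A) A))
                      (L_tenm C (L_dif C A) (L_id C (L_bang C A)))))) \<and>
    (\<forall>A. L_cmp C (L_dif C A) (L_der C A) = L_tenm C (weak C A) (L_id C A)) \<and>
    (\<forall>A. L_cmp C (L_dif C A) (L_prm C A) =
        L_cmp C (L_cmp C (L_tenm C (contr C A) (L_id C A)) (L_tenm C (L_prm C A) (L_dif C A)))
          (L_dif C (L_bang C A))) \<and>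
    (\<forall>A. L_cmp C (L_cmp C (L_tenm C (L_id C (L_bang C A)) (L_sym C A A)) (L_tenm C (L_dif C A) (L_id C A)))
          (L_dif C A) =
        L_cmp C (L_tenm C (L_dif C A) (L_id C A)) (L_dif C A))"

definition differential_seely_category :: "('o,'a) dsc_data \<Rightarrow> bool" where
  "differential_seely_category C \<longleftrightarrow> category_ax C \<and> additive_ax C \<and> monoidal_ax C \<and>
     biproduct_ax C \<and> comonad_ax C \<and> seely_ax C \<and> differential_ax C"

text \<open>Objects (X,A); arrows (f,u):(X,A)\<rightarrow>(Y,B) with f : X \<rightarrow> Y in L_! (i.e. !X \<rightarrow> Y in L)
  and u : F(X)\<otimes>A = !X\<otimes>A \<rightarrow> B in L.\<close>
definition LShom :: "('o,'a) dsc_data \<Rightarrow> 'o \<times> 'o \<Rightarrow> 'o \<times> 'o \<Rightarrow> ('a \<times> 'a) set" where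
  "LShom C XA YB = {(f,u). f \<in> hom C (L_bang C (fst XA)) (fst YB) \<and>
                           u \<in> hom C (L_ten C (L_bang C (fst XA)) (snd XA)) (snd YB)}"

definition lscomp :: "('o,'a) dsc_data \<Rightarrow> 'o \<times> 'o \<Rightarrow> 'a \<times> 'a \<Rightarrow> 'a \<times> 'a \<Rightarrow> 'a \<times> 'a" where
  "lscomp C XA fu gv =
     (kcomp C (fst XA) (fst fu) (fst gv),
      L_cmp C (L_cmp C (L_tenm C (contr C (fst XA)) (L_id C (snd XA)))
                       (L_tenm C (Fm C (fst XA) (fst fu)) (snd fu))) (snd gv))"

definition lsid :: "('o,'a) dsc_data \<Rightarrow> 'o \<times> 'o \<Rightarrow> 'a \<times> 'a" where
  "lsid C XA = (kid C (fst XA), L_tenm C (weak C (fst XA)) (L_id C (snd XA)))"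

definition lsproj1 :: "('o,'a) dsc_data \<Rightarrow> 'o \<times> 'o \<Rightarrow> 'o \<times> 'o \<Rightarrow> 'a \<times> 'a" where
  "lsproj1 C XA YB = (kpi1 C (fst XA) (fst YB),
     L_tenm C (weak C (L_bp C (fst XA) (fst YB))) (L_pr1 C (snd XA) (snd YB)))"

definition lsproj2 :: "('o,'a) dsc_data \<Rightarrow> 'o \<times> 'o \<Rightarrow> 'o \<times> 'o \<Rightarrow> 'a \<times> 'a" where
  "lsproj2 C XA YB = (kpi2 C (fst XA) (fst YB),
     L_tenm C (weak C (L_bp C (fst XA) (fst YB))) (L_pr2 C (snd XA) (snd YB)))"

definition lsprodob :: "('o,'a) dsc_data \<Rightarrow> 'o \<times> 'o \<Rightarrow> 'o \<times> 'o \<Rightarrow> 'o \<times> 'o" where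
  "lsprodob C XA YB = (L_bp C (fst XA) (fst YB), L_bp C (snd XA) (snd YB))"

definition lspair :: "('o,'a) dsc_data \<Rightarrow> 'o \<times> 'o \<Rightarrow> 'o \<times> 'o \<Rightarrow> 'o \<times> 'o \<Rightarrow> 'a \<times> 'a \<Rightarrow> 'a \<times> 'a \<Rightarrow> 'a \<times> 'a" where
  "lspair C Z XA YB a b = (THE h. h \<in> LShom C Z (lsprodob C XA YB) \<and>
      lscomp C Z h (lsproj1 C XA YB) = a \<and> lscomp C Z h (lsproj2 C XA YB) = b)"

definition lsiso :: "('o,'a) dsc_data \<Rightarrow> 'o \<times> 'o \<Rightarrow> 'o \<times> 'o \<Rightarrow> 'a \<times> 'a \<Rightarrow> bool" where
  "lsiso C P Q h \<longleftrightarrow> h \<in> LShom C P Q \<and>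
     (\<exists>k \<in> LShom C Q P. lscomp C P h k = lsid C P \<and> lscomp C Q k h = lsid C Q)"

definition lsinv :: "('o,'a) dsc_data \<Rightarrow> 'o \<times> 'o \<Rightarrow> 'o \<times> 'o \<Rightarrow> 'a \<times> 'a \<Rightarrow> 'a \<times> 'a" where
  "lsinv C P Q h = (THE k. k \<in> LShom C Q P \<and> lscomp C P h k = lsid C P \<and> lscomp C Q k h = lsid C Q)"

text \<open>T is given by its object part Tob and its arrow part Tar X Y : L_!(X,Y) \<rightarrow> LS(T X, T Y).\<close>

definition phi :: "('o,'a) dsc_data \<Rightarrow> ('o \<Rightarrow> 'o \<times> 'o) \<Rightarrow> ('o \<Rightarrow> 'o \<Rightarrow> 'a \<Rightarrow> 'a \<times> 'a) \<Rightarrow> 'o \<Rightarrow> 'o \<Rightarrow> 'a \<times> 'a" where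
  "phi C Tob Tar X Y = lspair C (Tob (L_bp C X Y)) (X, snd (Tob X)) (Y, snd (Tob Y))
      (Tar (L_bp C X Y) X (kpi1 C X Y)) (Tar (L_bp C X Y) Y (kpi2 C X Y))"

definition i2 :: "('o,'a) dsc_data \<Rightarrow> ('o \<Rightarrow> 'o \<times> 'o) \<Rightarrow> ('o \<Rightarrow> 'o \<Rightarrow> 'a \<Rightarrow> 'a \<times> 'a) \<Rightarrow> 'o \<Rightarrow> 'o \<Rightarrow> 'a \<times> 'a" where
  "i2 C Tob Tar X Y =
     lscomp C (L_bp C X Y, snd (Tob Y))
       (kid C (L_bp C X Y), L_tenm C (weak C (L_bp C X Y)) (L_in2 C (snd (Tob X)) (snd (Tob Y))))
       (lsinv C (Tob (L_bp C X Y)) (L_bp C X Y, L_bp C (snd (Tob X)) (snd (Tob Y))) (phi C Tob Tar X Y))"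

text \<open>Unit \<eta>_X : X \<rightarrow> U F X = !X of the co-Kleisli adjunction, and the lax structure
  n_{A,B} : U A \<times> U B \<rightarrow> U(A\<otimes>B) of U induced by the strong structure m of F:
  n = \<eta> ; U(m^{-1}) ; U(\<epsilon>_A \<otimes> \<epsilon>_B), \<epsilon> = d.\<close>
definition eta :: "('o,'a) dsc_data \<Rightarrow> 'o \<Rightarrow> 'a" where
  "eta C X = L_id C (L_bang C X)"

definition nlax :: "('o,'a) dsc_data \<Rightarrow> 'o \<Rightarrow> 'o \<Rightarrow> 'a" where
  "nlax C A B = kcomp C (L_bp C A B) (eta C (L_bp C A B))
      (kcomp C (L_bang C (L_bp C A B))
         (Um C (L_bang C (L_bp C A B))
             (inv_of C (L_ten C (L_bang C A) (L_bang C B)) (L_bang C (L_bp C A B)) (L_sly C A B)))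
         (Um C (L_ten C (L_bang C A) (L_bang C B)) (L_tenm C (L_der C A) (L_der C B))))"

text \<open>\<lbrace>(f,u)\<rbrace> = \<langle>\<pi>_1;f, (\<eta>_X \<times> id_{U A}); n_{F X, A}; U(u)\<rangle> : X \<times> U A \<rightarrow> Y \<times> U B in L_!.\<close>
definition bracket :: "('o,'a) dsc_data \<Rightarrow> 'o \<Rightarrow> 'o \<Rightarrow> 'o \<Rightarrow> 'o \<Rightarrow> 'a \<Rightarrow> 'a \<Rightarrow> 'a" where
  "bracket C X A Y B f u =
     kpair C Y B (kcomp C (L_bp C X A) (kpi1 C X A) f)
       (kcomp C (L_bp C X A)
          (kcomp C (L_bp C X A) (kprod C X A (L_bang C X) A (eta C X) (kid C A)) (nlax C (L_bang C X) A))
          (Um C (L_ten C (L_bang C X) A) u))"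

definition Wm :: "('o,'a) dsc_data \<Rightarrow> 'o \<Rightarrow> 'o \<Rightarrow> 'o \<Rightarrow> 'o \<Rightarrow> 'a \<Rightarrow> 'a \<Rightarrow> 'a \<times> 'a" where
  "Wm C X A Y B f u = (bracket C X A Y B f u,
      L_cmp C (L_tenm C (Fm C (L_bp C X A) (kpi1 C X A)) (L_id C A)) u)"

definition is_T_functor :: "('o,'a) dsc_data \<Rightarrow> ('o \<Rightarrow> 'o \<times> 'o) \<Rightarrow> ('o \<Rightarrow> 'o \<Rightarrow> 'a \<Rightarrow> 'a \<times> 'a) \<Rightarrow> bool" where
  "is_T_functor C Tob Tar \<longleftrightarrow>
    (\<forall>X Y f. f \<in> hom C (L_bang C X) Y \<longrightarrow> Tar X Y f \<in> LShom C (Tob X) (Tob Y)) \<and>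
    (\<forall>X. Tar X X (kid C X) = lsid C (Tob X)) \<and>
    (\<forall>X Y Z f g. f \<in> hom C (L_bang C X) Y \<longrightarrow> g \<in> hom C (L_bang C Y) Z \<longrightarrow>
        Tar X Z (kcomp C X f g) = lscomp C (Tob X) (Tar X Y f) (Tar Y Z g))"

definition axiom_t1 :: "('o,'a) dsc_data \<Rightarrow> ('o \<Rightarrow> 'o \<times> 'o) \<Rightarrow> ('o \<Rightarrow> 'o \<Rightarrow> 'a \<Rightarrow> 'a \<times> 'a) \<Rightarrow> bool" where
  "axiom_t1 C Tob Tar \<longleftrightarrow>
    (\<forall>X. fst (Tob X) = X) \<and>
    (\<forall>X Y f. f \<in> hom C (L_bang C X) Y \<longrightarrow> fst (Tar X Y f) = f) \<and>
    (\<forall>X Y. lsiso C (Tob (L_bp C X Y)) (L_bp C X Y, L_bp C (snd (Tob X)) (snd (Tob Y)))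
                   (phi C Tob Tar X Y))"

text \<open>(t.2): T(U A) = (U A, A); U is the identity on objects.\<close>
definition axiom_t2 :: "('o,'a) dsc_data \<Rightarrow> ('o \<Rightarrow> 'o \<times> 'o) \<Rightarrow> bool" where
  "axiom_t2 C Tob \<longleftrightarrow> (\<forall>A. Tob A = (A, A))"

definition axiom_t3 :: "('o,'a) dsc_data \<Rightarrow> ('o \<Rightarrow> 'o \<times> 'o) \<Rightarrow> ('o \<Rightarrow> 'o \<Rightarrow> 'a \<Rightarrow> 'a \<times> 'a) \<Rightarrow> bool" where
  "axiom_t3 C Tob Tar \<longleftrightarrow>
    (\<forall>X A Y B f u. (f, u) \<in> LShom C (X, A) (Y, B) \<longrightarrow>
       lscomp C (L_bp C X A, A) (Wm C X A Y B f u) (i2 C Tob Tar Y B) =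
       lscomp C (L_bp C X A, snd (Tob A)) (i2 C Tob Tar X A)
              (Tar (L_bp C X A) (L_bp C Y B) (bracket C X A Y B f u)))"

definition coKleisli_is_GDSC :: "('o,'a) dsc_data \<Rightarrow> bool" where
  "coKleisli_is_GDSC C \<longleftrightarrow> (\<exists>Tob Tar. is_T_functor C Tob Tar \<and>
      axiom_t1 C Tob Tar \<and> axiom_t2 C Tob \<and> axiom_t3 C Tob Tar)"

end

theory Submission
  imports Defs
begin


locale dsc =
  fixes C :: "('o,'a) dsc_data"
  assumes ax: "differential_seely_category C"
begin

abbreviation ar where "ar \<equiv> L_ar C"
abbreviation dm where "dm \<equiv> L_dom C"
abbreviation cd where "cd \<equiv> L_cod C"
abbreviation I where "I \<equiv> L_id C"
abbreviation cmp (infixr "\<cdot>" 55) where "f \<cdot> g \<equiv> L_cmp C f g"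
abbreviation Z where "Z \<equiv> L_zero C"
abbreviation pl (infixl "\<oplus>" 52) where "f \<oplus> g \<equiv> L_plus C f g"
abbreviation ten where "ten \<equiv> L_ten C"
abbreviation tm (infixr "\<otimes>" 60) where "f \<otimes> g \<equiv> L_tenm C f g"
abbreviation one where "one \<equiv> L_one C"
abbreviation sy where "sy \<equiv> L_sym C"
abbreviation bp where "bp \<equiv> L_bp C"
abbreviation pr1 where "pr1 \<equiv> L_pr1 C"
abbreviation pr2 where "pr2 \<equiv> L_pr2 C"
abbreviation in1 where "in1 \<equiv> L_in1 C"
abbreviation in2 where "in2 \<equiv> L_in2 C"
abbreviation zo where "zo \<equiv> L_zo C"
abbreviation bg where "bg \<equiv> L_bang C"
abbreviation bm where "bm \<equiv> L_bangm C"
abbreviation d where "d \<equiv> L_der C"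
abbreviation p where "p \<equiv> L_prm C"
abbreviation m where "m \<equiv> L_sly C"
abbreviation m0 where "m0 \<equiv> L_sly0 C"
abbreviation df where "df \<equiv> L_dif C"
abbreviation mi where "mi X Y \<equiv> inv_of C (ten (bg X) (bg Y)) (bg (bp X Y)) (m X Y)"
abbreviation m0i where "m0i \<equiv> inv_of C one (bg zo) m0"
abbreviation w where "w \<equiv> weak C"
abbreviation c where "c \<equiv> contr C"
abbreviation F where "F \<equiv> Fm C"

lemma hom_iff: "f \<in> hom C A B \<longleftrightarrow> f \<in> ar \<and> dm f = A \<and> cd f = B"
  by (auto simp: hom_def)

lemmas ax0 = ax[unfolded differential_seely_category_def]
lemmas axC = ax0[THEN conjunct1, unfolded category_ax_def hom_iff]
lemmas axA = ax0[THEN conjunct2, THEN conjunct1, unfolded additive_ax_def hom_iff]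
lemmas axM = ax0[THEN conjunct2, THEN conjunct2, THEN conjunct1, unfolded monoidal_ax_def hom_iff]
lemmas axB = ax0[THEN conjunct2, THEN conjunct2, THEN conjunct2, THEN conjunct1, unfolded biproduct_ax_def hom_iff]
lemmas axK = ax0[THEN conjunct2, THEN conjunct2, THEN conjunct2, THEN conjunct2, THEN conjunct1, unfolded comonad_ax_def hom_iff]
lemmas axS = ax0[THEN conjunct2, THEN conjunct2, THEN conjunct2, THEN conjunct2, THEN conjunct2, THEN conjunct1, unfolded seely_ax_def]
lemmas axD = ax0[THEN conjunct2, THEN conjunct2, THEN conjunct2, THEN conjunct2, THEN conjunct2, THEN conjunct2, unfolded differential_ax_def hom_iff]


lemma id_ty[simp]: "I A \<in> ar" "dm (I A) = A" "cd (I A) = A" using axC by auto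
lemma cmp_ty[simp]:
  "f \<in> ar \<Longrightarrow> g \<in> ar \<Longrightarrow> cd f = dm g \<Longrightarrow> f \<cdot> g \<in> ar"
  "f \<in> ar \<Longrightarrow> g \<in> ar \<Longrightarrow> cd f = dm g \<Longrightarrow> dm (f \<cdot> g) = dm f"
  "f \<in> ar \<Longrightarrow> g \<in> ar \<Longrightarrow> cd f = dm g \<Longrightarrow> cd (f \<cdot> g) = cd g"
  using axC by auto
lemma idl[simp]: "f \<in> ar \<Longrightarrow> dm f = A \<Longrightarrow> I A \<cdot> f = f" using axC by (auto; fail)
lemma idr[simp]: "f \<in> ar \<Longrightarrow> cd f = A \<Longrightarrow> f \<cdot> I A = f" using axC by (auto; fail)
lemma assoc[simp]: "f \<in> ar \<Longrightarrow> g \<in> ar \<Longrightarrow> h \<in> ar \<Longrightarrow> cd f = dm g \<Longrightarrow> cd g = dm h \<Longrightarrow>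
   (f \<cdot> g) \<cdot> h = f \<cdot> g \<cdot> h"
  using axC by (auto; fail)

lemma zero_ty[simp]: "Z A B \<in> ar" "dm (Z A B) = A" "cd (Z A B) = B" using axA by auto
lemma plus_ty[simp]:
  "f \<in> ar \<Longrightarrow> g \<in> ar \<Longrightarrow> dm g = dm f \<Longrightarrow> cd g = cd f \<Longrightarrow> f \<oplus> g \<in> ar"
  "f \<in> ar \<Longrightarrow> g \<in> ar \<Longrightarrow> dm g = dm f \<Longrightarrow> cd g = cd f \<Longrightarrow> dm (f \<oplus> g) = dm f"
  "f \<in> ar \<Longrightarrow> g \<in> ar \<Longrightarrow> dm g = dm f \<Longrightarrow> cd g = cd f \<Longrightarrow> cd (f \<oplus> g) = cd f"
  using axA by (metis (no_types))+
lemma plus_zero[simp]: "f \<in> ar \<Longrightarrow> dm f = A \<Longrightarrow> cd f = B \<Longrightarrow> f \<oplus> Z A B = f" using axA by (auto; fail)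
lemma plus_comm: "f \<in> ar \<Longrightarrow> g \<in> ar \<Longrightarrow> dm g = dm f \<Longrightarrow> cd g = cd f \<Longrightarrow> f \<oplus> g = g \<oplus> f"
  using axA by (auto; fail)
lemma zero_plus[simp]: "f \<in> ar \<Longrightarrow> dm f = A \<Longrightarrow> cd f = B \<Longrightarrow> Z A B \<oplus> f = f"
  using plus_comm[of f "Z A B"] by simp
lemma distr_r: "f \<in> ar \<Longrightarrow> g \<in> ar \<Longrightarrow> h \<in> ar \<Longrightarrow> dm g = dm f \<Longrightarrow> cd g = cd f \<Longrightarrow> cd f = dm h \<Longrightarrow>
   (f \<oplus> g) \<cdot> h = f \<cdot> h \<oplus> g \<cdot> h" using axA by (auto; fail)
lemma distr_l: "f \<in> ar \<Longrightarrow> g \<in> ar \<Longrightarrow> h \<in> ar \<Longrightarrow> dm g = dm f \<Longrightarrow> cd g = cd f \<Longrightarrow> cd h = dm f \<Longrightarrow>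
   h \<cdot> (f \<oplus> g) = h \<cdot> f \<oplus> h \<cdot> g" using axA by (auto; fail)
lemma zero_cmp[simp]: "h \<in> ar \<Longrightarrow> dm h = B \<Longrightarrow> Z A B \<cdot> h = Z A (cd h)" using axA by (auto; fail)
lemma cmp_zero[simp]: "h \<in> ar \<Longrightarrow> cd h = B \<Longrightarrow> h \<cdot> Z B D = Z (dm h) D" using axA by (auto; fail)

lemma tm_ty[simp]:
  "f \<in> ar \<Longrightarrow> g \<in> ar \<Longrightarrow> f \<otimes> g \<in> ar"
  "f \<in> ar \<Longrightarrow> g \<in> ar \<Longrightarrow> dm (f \<otimes> g) = ten (dm f) (dm g)"
  "f \<in> ar \<Longrightarrow> g \<in> ar \<Longrightarrow> cd (f \<otimes> g) = ten (cd f) (cd g)"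
  using axM by auto
lemma tm_id[simp]: "I A \<otimes> I B = I (ten A B)" using axM by (auto; fail)
lemma interchange: "f \<in> ar \<Longrightarrow> g \<in> ar \<Longrightarrow> f' \<in> ar \<Longrightarrow> g' \<in> ar \<Longrightarrow> cd f = dm g \<Longrightarrow> cd f' = dm g' \<Longrightarrow>
   (f \<cdot> g) \<otimes> (f' \<cdot> g') = (f \<otimes> f') \<cdot> (g \<otimes> g')" using axM by (auto; fail)
lemma ten_assoc[simp]: "ten (ten A B) D = ten A (ten B D)" using axM by (auto; fail)
lemma ten_unit[simp]: "ten one A = A" "ten A one = A" using axM by auto
lemma tm_assoc[simp]: "f \<in> ar \<Longrightarrow> g \<in> ar \<Longrightarrow> h \<in> ar \<Longrightarrow> (f \<otimes> g) \<otimes> h = f \<otimes> g \<otimes> h"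
  using axM by (auto; fail)
lemma tm_unit[simp]: "f \<in> ar \<Longrightarrow> I one \<otimes> f = f" "f \<in> ar \<Longrightarrow> f \<otimes> I one = f" using axM by auto
lemma sym_ty[simp]: "sy A B \<in> ar" "dm (sy A B) = ten A B" "cd (sy A B) = ten B A" using axM by auto
lemma sym_nat: "f \<in> ar \<Longrightarrow> g \<in> ar \<Longrightarrow> (f \<otimes> g) \<cdot> sy (cd f) (cd g) = sy (dm f) (dm g) \<cdot> (g \<otimes> f)"
  using axM by (auto; fail)
lemma tm_plus_l: "f \<in> ar \<Longrightarrow> g \<in> ar \<Longrightarrow> h \<in> ar \<Longrightarrow> dm g = dm f \<Longrightarrow> cd g = cd f \<Longrightarrow>
   (f \<oplus> g) \<otimes> h = f \<otimes> h \<oplus> g \<otimes> h" using axM by (auto; fail)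
lemma tm_plus_r: "f \<in> ar \<Longrightarrow> g \<in> ar \<Longrightarrow> h \<in> ar \<Longrightarrow> dm g = dm f \<Longrightarrow> cd g = cd f \<Longrightarrow>
   h \<otimes> (f \<oplus> g) = h \<otimes> f \<oplus> h \<otimes> g" using axM by (auto; fail)
lemma tm_zero[simp]: "h \<in> ar \<Longrightarrow> Z A B \<otimes> h = Z (ten A (dm h)) (ten B (cd h))"
   "h \<in> ar \<Longrightarrow> h \<otimes> Z A B = Z (ten (dm h) A) (ten (cd h) B)" using axM by auto

lemma bp_ty[simp]: "pr1 A B \<in> ar" "dm (pr1 A B) = bp A B" "cd (pr1 A B) = A"
  "pr2 A B \<in> ar" "dm (pr2 A B) = bp A B" "cd (pr2 A B) = B"
  "in1 A B \<in> ar" "dm (in1 A B) = A" "cd (in1 A B) = bp A B"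
  "in2 A B \<in> ar" "dm (in2 A B) = B" "cd (in2 A B) = bp A B" using axB by auto
lemma bp_eq[simp]: "in1 A B \<cdot> pr1 A B = I A" "in1 A B \<cdot> pr2 A B = Z A B"
  "in2 A B \<cdot> pr1 A B = Z B A" "in2 A B \<cdot> pr2 A B = I B" using axB by auto
lemma bp_id: "pr1 A B \<cdot> in1 A B \<oplus> pr2 A B \<cdot> in2 A B = I (bp A B)" using axB by (auto; fail)

lemma bm_ty[simp]: "f \<in> ar \<Longrightarrow> bm f \<in> ar" "f \<in> ar \<Longrightarrow> dm (bm f) = bg (dm f)"
  "f \<in> ar \<Longrightarrow> cd (bm f) = bg (cd f)" using axK by auto
lemma bm_id[simp]: "bm (I A) = I (bg A)" using axK by (auto; fail)
lemma bm_cmp: "f \<in> ar \<Longrightarrow> g \<in> ar \<Longrightarrow> cd f = dm g \<Longrightarrow> bm (f \<cdot> g) = bm f \<cdot> bm g" using axK by (auto; fail)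
lemma dp_ty[simp]: "d A \<in> ar" "dm (d A) = bg A" "cd (d A) = A"
  "p A \<in> ar" "dm (p A) = bg A" "cd (p A) = bg (bg A)" using axK by auto
lemma d_nat: "f \<in> ar \<Longrightarrow> bm f \<cdot> d (cd f) = d (dm f) \<cdot> f" using axK by (auto; fail)
lemma p_nat: "f \<in> ar \<Longrightarrow> p (dm f) \<cdot> bm (bm f) = bm f \<cdot> p (cd f)" using axK by (auto; fail)
lemma p_d[simp]: "p A \<cdot> d (bg A) = I (bg A)" "p A \<cdot> bm (d A) = I (bg A)" using axK by auto
lemma coassoc: "p A \<cdot> p (bg A) = p A \<cdot> bm (p A)" using axK by (auto; fail)

lemma df_ty[simp]: "df A \<in> ar" "dm (df A) = ten (bg A) A" "cd (df A) = bg A" using axD by auto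
lemma df_nat: "f \<in> ar \<Longrightarrow> df (dm f) \<cdot> bm f = (bm f \<otimes> f) \<cdot> df (cd f)" using axD by (auto; fail)
lemma df_c: "df A \<cdot> c A = (c A \<otimes> I A) \<cdot>
          (I (bg A) \<otimes> df A \<oplus> (I (bg A) \<otimes> sy (bg A) A) \<cdot> (df A \<otimes> I (bg A)))" using axD by (auto; fail)
lemma df_d: "df A \<cdot> d A = w A \<otimes> I A" using axD by (auto; fail)
lemma df_p: "df A \<cdot> p A = ((c A \<otimes> I A) \<cdot> (p A \<otimes> df A)) \<cdot> df (bg A)" using axD by (auto; fail)

lemma m_iso: "is_iso C (ten (bg X) (bg Y)) (bg (bp X Y)) (m X Y)" using axS by (auto; fail)
lemma m0_iso: "is_iso C one (bg zo) m0" using axS by (auto; fail)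
lemma seely_nat: "f \<in> hom C (bg X) X' \<Longrightarrow> g \<in> hom C (bg Y) Y' \<Longrightarrow>
        (F X f \<otimes> F Y g) \<cdot> m X' Y' = m X Y \<cdot> F (bp X Y) (kprod C X Y X' Y' f g)"
  using axS by (auto; fail)
lemma seely_u2: "((m0 \<otimes> I (bg X)) \<cdot> m zo X) \<cdot> F (bp zo X) (kpi2 C zo X) = I (bg X)" using axS by (auto; fail)
lemma seely_u1: "((I (bg X) \<otimes> m0) \<cdot> m X zo) \<cdot> F (bp X zo) (kpi1 C X zo) = I (bg X)" using axS by (auto; fail)

end


context dsc begin

lemma tail: "a \<cdot> b = e \<Longrightarrow> a \<in> ar \<Longrightarrow> b \<in> ar \<Longrightarrow> h \<in> ar \<Longrightarrow> cd a = dm b \<Longrightarrow> cd b = dm h \<Longrightarrow>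
   a \<cdot> b \<cdot> h = e \<cdot> h"
  by (metis assoc)

lemma cancel[simp]: "a \<cdot> b = I (dm h) \<Longrightarrow> a \<in> ar \<Longrightarrow> b \<in> ar \<Longrightarrow> h \<in> ar \<Longrightarrow> cd a = dm b \<Longrightarrow> cd b = dm h \<Longrightarrow>
   a \<cdot> b \<cdot> h = h"
  by (metis assoc idl)

lemma iso_inv: assumes "is_iso C A B f"
  shows "inv_of C A B f \<in> ar" "dm (inv_of C A B f) = B" "cd (inv_of C A B f) = A"
    "f \<cdot> inv_of C A B f = I A" "inv_of C A B f \<cdot> f = I B"
proof -
  obtain g where g: "g \<in> hom C B A" "f \<cdot> g = I A" "g \<cdot> f = I B" "f \<in> hom C A B"
    using assms unfolding is_iso_def by blast
  have u: "\<exists>!g. g \<in> hom C B A \<and> f \<cdot> g = I A \<and> g \<cdot> f = I B"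
  proof (rule ex1I[of _ g])
    show "g \<in> hom C B A \<and> f \<cdot> g = I A \<and> g \<cdot> f = I B" using g by blast
    fix g' assume h: "g' \<in> hom C B A \<and> f \<cdot> g' = I A \<and> g' \<cdot> f = I B"
    have "g' = g' \<cdot> (f \<cdot> g)" using h g by (simp add: hom_iff)
    also have "\<dots> = (g' \<cdot> f) \<cdot> g" by (subst assoc) (use h g in \<open>auto simp: hom_iff\<close>)
    also have "\<dots> = g" using h g by (simp add: hom_iff)
    finally show "g' = g" .
  qed
  have "inv_of C A B f \<in> hom C B A \<and> f \<cdot> inv_of C A B f = I A \<and> inv_of C A B f \<cdot> f = I B"
    unfolding inv_of_def by (rule theI'[OF u])
  then show "inv_of C A B f \<in> ar" "dm (inv_of C A B f) = B" "cd (inv_of C A B f) = A"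
    "f \<cdot> inv_of C A B f = I A" "inv_of C A B f \<cdot> f = I B" by (auto simp: hom_iff)
qed

lemma m_ty[simp]: "m X Y \<in> ar" "dm (m X Y) = ten (bg X) (bg Y)" "cd (m X Y) = bg (bp X Y)"
  "mi X Y \<in> ar" "dm (mi X Y) = bg (bp X Y)" "cd (mi X Y) = ten (bg X) (bg Y)"
  "m0 \<in> ar" "dm m0 = one" "cd m0 = bg zo"
  "m0i \<in> ar" "dm m0i = bg zo" "cd m0i = one"
  using m_iso[of X Y] m0_iso iso_inv[OF m_iso[of X Y]] iso_inv[OF m0_iso] by (auto simp: is_iso_def hom_iff)

lemma m_inv[simp]: "m X Y \<cdot> mi X Y = I (ten (bg X) (bg Y))" "mi X Y \<cdot> m X Y = I (bg (bp X Y))"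
  "m0 \<cdot> m0i = I one" "m0i \<cdot> m0 = I (bg zo)"
  using iso_inv[OF m_iso[of X Y]] iso_inv[OF m0_iso] by auto

lemma F_def': "F X f = p X \<cdot> bm f" by (simp add: Fm_def)
lemma kcomp_F: "kcomp C X f g = F X f \<cdot> g" by (simp add: kcomp_def Fm_def)

lemma F_ty[simp]: "f \<in> ar \<Longrightarrow> dm f = bg X \<Longrightarrow> F X f \<in> ar"
  "f \<in> ar \<Longrightarrow> dm f = bg X \<Longrightarrow> dm (F X f) = bg X"
  "f \<in> ar \<Longrightarrow> dm f = bg X \<Longrightarrow> cd (F X f) = bg (cd f)"
  by (simp_all add: F_def')

lemma F_d[simp]: "f \<in> ar \<Longrightarrow> dm f = bg X \<Longrightarrow> cd f = Y \<Longrightarrow> F X f \<cdot> d Y = f"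
  using d_nat[of f] by (simp add: F_def')
lemma F_d_tail[simp]: "f \<in> ar \<Longrightarrow> dm f = bg X \<Longrightarrow> cd f = Y \<Longrightarrow> h \<in> ar \<Longrightarrow> dm h = Y \<Longrightarrow> F X f \<cdot> d Y \<cdot> h = f \<cdot> h"
  by (subst tail[OF F_d]) auto
lemma F_kid[simp]: "F X (d X) = I (bg X)" by (simp add: F_def')
lemma F_eta[simp]: "F X (I (bg X)) = p X" by (simp add: F_def')
lemma F_dg: "g \<in> ar \<Longrightarrow> dm g = X \<Longrightarrow> F X (d X \<cdot> g) = bm g"
  by (simp add: F_def' bm_cmp)

lemma F_cmp: assumes "f \<in> ar" "dm f = bg X" "g \<in> ar" "dm g = bg (cd f)"
  shows "F X f \<cdot> F (cd f) g = F X (F X f \<cdot> g)"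
proof -
  have "F X f \<cdot> F (cd f) g = p X \<cdot> (bm f \<cdot> p (cd f)) \<cdot> bm g" using assms by (simp add: F_def')
  also have "\<dots> = p X \<cdot> (p (bg X) \<cdot> bm (bm f)) \<cdot> bm g" using assms p_nat[of f] by simp
  also have "\<dots> = (p X \<cdot> p (bg X)) \<cdot> bm (bm f) \<cdot> bm g" using assms by simp
  also have "\<dots> = (p X \<cdot> bm (p X)) \<cdot> bm (bm f) \<cdot> bm g" using coassoc by simp
  also have "\<dots> = F X (F X f \<cdot> g)" using assms by (simp add: F_def' bm_cmp)
  finally show ?thesis .
qed


lemma bp_eq_tail[simp]:
  "h \<in> ar \<Longrightarrow> dm h = A \<Longrightarrow> in2 A B \<cdot> pr1 A B \<cdot> h = Z B (cd h)"
  "h \<in> ar \<Longrightarrow> dm h = B \<Longrightarrow> in1 A B \<cdot> pr2 A B \<cdot> h = Z A (cd h)"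
  by (subst tail[OF bp_eq(3)], auto) (subst tail[OF bp_eq(2)], auto)

lemma kpi_def': "kpi1 C X Y = d (bp X Y) \<cdot> pr1 X Y" "kpi2 C X Y = d (bp X Y) \<cdot> pr2 X Y"
  by (simp_all add: kpi1_def kpi2_def)
lemma kpi_ty[simp]: "kpi1 C X Y \<in> ar" "dm (kpi1 C X Y) = bg (bp X Y)" "cd (kpi1 C X Y) = X"
  "kpi2 C X Y \<in> ar" "dm (kpi2 C X Y) = bg (bp X Y)" "cd (kpi2 C X Y) = Y"
  by (simp_all add: kpi_def')
lemma F_pi[simp]: "F (bp X Y) (kpi1 C X Y) = bm (pr1 X Y)" "F (bp X Y) (kpi2 C X Y) = bm (pr2 X Y)"
  by (simp_all add: kpi_def' F_dg)
lemma F_kpi: "h \<in> ar \<Longrightarrow> dm h = bg X \<Longrightarrow> cd h = bp Y W \<Longrightarrow> F X h \<cdot> kpi1 C Y W = h \<cdot> pr1 Y W"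
  "h \<in> ar \<Longrightarrow> dm h = bg X \<Longrightarrow> cd h = bp Y W \<Longrightarrow> F X h \<cdot> kpi2 C Y W = h \<cdot> pr2 Y W"
  by (simp_all add: kpi_def')

lemma kpair_def': "kpair C Y W f g = f \<cdot> in1 Y W \<oplus> g \<cdot> in2 Y W" by (simp add: kpair_def)
lemma kpair_ty[simp]: "f \<in> ar \<Longrightarrow> g \<in> ar \<Longrightarrow> dm g = dm f \<Longrightarrow> cd f = Y \<Longrightarrow> cd g = W \<Longrightarrow> kpair C Y W f g \<in> ar"
  "f \<in> ar \<Longrightarrow> g \<in> ar \<Longrightarrow> dm g = dm f \<Longrightarrow> cd f = Y \<Longrightarrow> cd g = W \<Longrightarrow> dm (kpair C Y W f g) = dm f"
  "f \<in> ar \<Longrightarrow> g \<in> ar \<Longrightarrow> dm g = dm f \<Longrightarrow> cd f = Y \<Longrightarrow> cd g = W \<Longrightarrow> cd (kpair C Y W f g) = bp Y W"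
  by (simp_all add: kpair_def')
lemma kpair_pr[simp]: "f \<in> ar \<Longrightarrow> g \<in> ar \<Longrightarrow> dm g = dm f \<Longrightarrow> cd f = Y \<Longrightarrow> cd g = W \<Longrightarrow> kpair C Y W f g \<cdot> pr1 Y W = f"
  "f \<in> ar \<Longrightarrow> g \<in> ar \<Longrightarrow> dm g = dm f \<Longrightarrow> cd f = Y \<Longrightarrow> cd g = W \<Longrightarrow> kpair C Y W f g \<cdot> pr2 Y W = g"
  by (simp_all add: kpair_def' distr_r)

lemma bp_ext: assumes "f \<in> ar" "g \<in> ar" "dm g = dm f" "cd f = bp A B" "cd g = bp A B"
  "f \<cdot> pr1 A B = g \<cdot> pr1 A B" "f \<cdot> pr2 A B = g \<cdot> pr2 A B" shows "f = g"
proof -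
  have "f = f \<cdot> (pr1 A B \<cdot> in1 A B \<oplus> pr2 A B \<cdot> in2 A B)" using assms by (simp add: bp_id)
  also have "\<dots> = (f \<cdot> pr1 A B) \<cdot> in1 A B \<oplus> (f \<cdot> pr2 A B) \<cdot> in2 A B" using assms(1-5) by (simp add: distr_l)
  also have "\<dots> = (g \<cdot> pr1 A B) \<cdot> in1 A B \<oplus> (g \<cdot> pr2 A B) \<cdot> in2 A B" by (simp only: assms(6,7))
  also have "\<dots> = g \<cdot> (pr1 A B \<cdot> in1 A B \<oplus> pr2 A B \<cdot> in2 A B)" using assms(1-5) by (simp add: distr_l)
  also have "\<dots> = g" using assms by (simp add: bp_id)
  finally show ?thesis .
qed

lemma kprod_def': "f \<in> ar \<Longrightarrow> g \<in> ar \<Longrightarrow> dm f = bg X \<Longrightarrow> dm g = bg Y \<Longrightarrow>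
  kprod C X Y X' Y' f g = kpair C X' Y' (bm (pr1 X Y) \<cdot> f) (bm (pr2 X Y) \<cdot> g)"
  by (simp add: kprod_def kcomp_F)
lemma kprod_ty[simp]: "f \<in> ar \<Longrightarrow> g \<in> ar \<Longrightarrow> dm f = bg X \<Longrightarrow> dm g = bg Y \<Longrightarrow> cd f = X' \<Longrightarrow> cd g = Y' \<Longrightarrow>
   kprod C X Y X' Y' f g \<in> ar"
  "f \<in> ar \<Longrightarrow> g \<in> ar \<Longrightarrow> dm f = bg X \<Longrightarrow> dm g = bg Y \<Longrightarrow> cd f = X' \<Longrightarrow> cd g = Y' \<Longrightarrow>
   dm (kprod C X Y X' Y' f g) = bg (bp X Y)"
  "f \<in> ar \<Longrightarrow> g \<in> ar \<Longrightarrow> dm f = bg X \<Longrightarrow> dm g = bg Y \<Longrightarrow> cd f = X' \<Longrightarrow> cd g = Y' \<Longrightarrow>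
   cd (kprod C X Y X' Y' f g) = bp X' Y'"
  by (simp_all add: kprod_def')

lemma kcomp_kprod: assumes "h \<in> ar" "dm h = bg X" "cd h = bp Y W" "f \<in> ar" "g \<in> ar"
  "dm f = bg Y" "dm g = bg W" "cd f = Y'" "cd g = W'"
  shows "F X h \<cdot> kprod C Y W Y' W' f g = kpair C Y' W' (F X (h \<cdot> pr1 Y W) \<cdot> f) (F X (h \<cdot> pr2 Y W) \<cdot> g)"
proof -
  have "F X h \<cdot> kprod C Y W Y' W' f g = F X h \<cdot> ((F (bp Y W) (kpi1 C Y W) \<cdot> f) \<cdot> in1 Y' W' \<oplus> (F (bp Y W) (kpi2 C Y W) \<cdot> g) \<cdot> in2 Y' W')"
    using assms by (simp add: kprod_def kcomp_F kpair_def')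
  also have "\<dots> = ((F X h \<cdot> F (bp Y W) (kpi1 C Y W)) \<cdot> f) \<cdot> in1 Y' W' \<oplus> ((F X h \<cdot> F (bp Y W) (kpi2 C Y W)) \<cdot> g) \<cdot> in2 Y' W'"
    using assms by (simp add: distr_l del: F_pi)
  also have "\<dots> = (F X (h \<cdot> pr1 Y W) \<cdot> f) \<cdot> in1 Y' W' \<oplus> (F X (h \<cdot> pr2 Y W) \<cdot> g) \<cdot> in2 Y' W'"
    using assms F_cmp[of h X "kpi1 C Y W"] F_cmp[of h X "kpi2 C Y W"] by (simp add: F_kpi del: F_pi)
  finally show ?thesis using assms by (simp add: kpair_def')
qed

lemma kterm_def': "kterm C X = Z (bg X) zo" by (simp add: kterm_def)
lemma kdiag_def': "kdiag C X = kpair C X X (d X) (d X)" by (simp add: kdiag_def kid_def)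

lemma wc_ty[simp]: "w X \<in> ar" "dm (w X) = bg X" "cd (w X) = one"
  "c X \<in> ar" "dm (c X) = bg X" "cd (c X) = ten (bg X) (bg X)"
  by (simp_all add: weak_def contr_def kterm_def' kdiag_def')

lemma w_nat: assumes "h \<in> ar" "dm h = bg X" shows "F X h \<cdot> w (cd h) = w X"
proof -
  have "F X h \<cdot> w (cd h) = (F X h \<cdot> F (cd h) (kterm C (cd h))) \<cdot> m0i" using assms by (simp add: weak_def kterm_def')
  also have "\<dots> = w X" using assms F_cmp[of h X "kterm C (cd h)"] by (simp add: weak_def kterm_def')
  finally show ?thesis .
qed
lemma w_nat_tail: "h \<in> ar \<Longrightarrow> dm h = bg X \<Longrightarrow> k \<in> ar \<Longrightarrow> dm k = one \<Longrightarrow> F X h \<cdot> w (cd h) \<cdot> k = w X \<cdot> k"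
  by (subst tail[OF w_nat]) auto

lemma seely_nat_inv: assumes "f \<in> ar" "g \<in> ar" "dm f = bg X" "dm g = bg Y"
  shows "mi X Y \<cdot> (F X f \<otimes> F Y g) = F (bp X Y) (kprod C X Y (cd f) (cd g) f g) \<cdot> mi (cd f) (cd g)"
proof -
  have e: "(F X f \<otimes> F Y g) \<cdot> m (cd f) (cd g) = m X Y \<cdot> F (bp X Y) (kprod C X Y (cd f) (cd g) f g)"
    using assms by (intro seely_nat) (auto simp: hom_iff)
  have "mi X Y \<cdot> (F X f \<otimes> F Y g) = mi X Y \<cdot> ((F X f \<otimes> F Y g) \<cdot> m (cd f) (cd g)) \<cdot> mi (cd f) (cd g)"
    using assms by simp
  also have "\<dots> = mi X Y \<cdot> (m X Y \<cdot> F (bp X Y) (kprod C X Y (cd f) (cd g) f g)) \<cdot> mi (cd f) (cd g)"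
    by (simp only: e)
  also have "\<dots> = F (bp X Y) (kprod C X Y (cd f) (cd g) f g) \<cdot> mi (cd f) (cd g)" using assms by simp
  finally show ?thesis .
qed

lemma unit_inv2: "mi zo X \<cdot> (m0i \<otimes> I (bg X)) = F (bp zo X) (kpi2 C zo X)"
proof -
  let ?K = "mi zo X \<cdot> (m0i \<otimes> I (bg X))" and ?J = "(m0 \<otimes> I (bg X)) \<cdot> m zo X"
  have KJ: "?K \<cdot> ?J = I (bg (bp zo X))"
  proof -
    have "?K \<cdot> ?J = mi zo X \<cdot> ((m0i \<otimes> I (bg X)) \<cdot> (m0 \<otimes> I (bg X))) \<cdot> m zo X" by simp
    also have "(m0i \<otimes> I (bg X)) \<cdot> (m0 \<otimes> I (bg X)) = (m0i \<cdot> m0) \<otimes> (I (bg X) \<cdot> I (bg X))"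
      by (simp add: interchange[symmetric])
    finally show ?thesis by simp
  qed
  have "?K = ?K \<cdot> (?J \<cdot> F (bp zo X) (kpi2 C zo X))" using seely_u2[of X] by simp
  also have "\<dots> = (?K \<cdot> ?J) \<cdot> F (bp zo X) (kpi2 C zo X)" by (simp del: F_pi)
  also have "\<dots> = F (bp zo X) (kpi2 C zo X)" by (simp only: KJ) (simp del: F_pi)
  finally show ?thesis .
qed

lemma unit_inv1: "mi X zo \<cdot> (I (bg X) \<otimes> m0i) = F (bp X zo) (kpi1 C X zo)"
proof -
  let ?K = "mi X zo \<cdot> (I (bg X) \<otimes> m0i)" and ?J = "(I (bg X) \<otimes> m0) \<cdot> m X zo"
  have KJ: "?K \<cdot> ?J = I (bg (bp X zo))"
  proof -
    have "?K \<cdot> ?J = mi X zo \<cdot> ((I (bg X) \<otimes> m0i) \<cdot> (I (bg X) \<otimes> m0)) \<cdot> m X zo" by simp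
    also have "(I (bg X) \<otimes> m0i) \<cdot> (I (bg X) \<otimes> m0) = (I (bg X) \<cdot> I (bg X)) \<otimes> (m0i \<cdot> m0)"
      by (simp add: interchange[symmetric])
    finally show ?thesis by simp
  qed
  have "?K = ?K \<cdot> (?J \<cdot> F (bp X zo) (kpi1 C X zo))" using seely_u1[of X] by simp
  also have "\<dots> = (?K \<cdot> ?J) \<cdot> F (bp X zo) (kpi1 C X zo)" by (simp del: F_pi)
  also have "\<dots> = F (bp X zo) (kpi1 C X zo)" by (simp only: KJ) (simp del: F_pi)
  finally show ?thesis .
qed


lemma kdiag_ty[simp]: "kdiag C X \<in> ar" "dm (kdiag C X) = bg X" "cd (kdiag C X) = bp X X"
  by (simp_all add: kdiag_def')
lemma kdiag_pr[simp]: "kdiag C X \<cdot> pr1 X X = d X" "kdiag C X \<cdot> pr2 X X = d X"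
  by (simp_all add: kdiag_def')
lemma kterm_ty[simp]: "kterm C X \<in> ar" "dm (kterm C X) = bg X" "cd (kterm C X) = zo"
  by (simp_all add: kterm_def')
lemma c_def': "c X = F X (kdiag C X) \<cdot> mi X X" by (simp add: contr_def)
lemma w_def': "w X = F X (kterm C X) \<cdot> m0i" by (simp add: weak_def)

lemma counit_l[simp]: "c X \<cdot> (w X \<otimes> I (bg X)) = I (bg X)"
proof -
  let ?K = "kprod C X X zo X (kterm C X) (d X)"
  have 1: "w X \<otimes> I (bg X) = (F X (kterm C X) \<otimes> F X (d X)) \<cdot> (m0i \<otimes> I (bg X))"
    by (simp add: w_def' interchange[symmetric])
  have 2: "mi X X \<cdot> (F X (kterm C X) \<otimes> F X (d X)) = F (bp X X) ?K \<cdot> mi zo X"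
    using seely_nat_inv[of "kterm C X" "d X" X X] by (simp del: F_kid)
  have 3: "F X (kdiag C X) \<cdot> ?K = kpair C zo X (kterm C X) (d X)"
    by (subst kcomp_kprod) simp_all
  have "c X \<cdot> (w X \<otimes> I (bg X)) = F X (kdiag C X) \<cdot> (mi X X \<cdot> (F X (kterm C X) \<otimes> F X (d X))) \<cdot> (m0i \<otimes> I (bg X))"
    unfolding 1 c_def' by (simp del: F_kid)
  also have "\<dots> = F X (kdiag C X) \<cdot> (F (bp X X) ?K \<cdot> mi zo X) \<cdot> (m0i \<otimes> I (bg X))" by (simp only: 2)
  also have "\<dots> = (F X (kdiag C X) \<cdot> F (bp X X) ?K) \<cdot> (mi zo X \<cdot> (m0i \<otimes> I (bg X)))" by simp
  also have "\<dots> = (F X (kdiag C X) \<cdot> F (bp X X) ?K) \<cdot> F (bp zo X) (kpi2 C zo X)" by (simp only: unit_inv2)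
  also have "\<dots> = F X (F X (F X (kdiag C X) \<cdot> ?K) \<cdot> kpi2 C zo X)"
    using F_cmp[of "kdiag C X" X ?K] F_cmp[of "F X (kdiag C X) \<cdot> ?K" X "kpi2 C zo X"] by (simp del: F_pi)
  also have "\<dots> = I (bg X)" unfolding 3 by (simp add: F_kpi)
  finally show ?thesis .
qed

lemma counit_r[simp]: "c X \<cdot> (I (bg X) \<otimes> w X) = I (bg X)"
proof -
  let ?K = "kprod C X X X zo (d X) (kterm C X)"
  have 1: "I (bg X) \<otimes> w X = (F X (d X) \<otimes> F X (kterm C X)) \<cdot> (I (bg X) \<otimes> m0i)"
    by (simp add: w_def' interchange[symmetric])
  have 2: "mi X X \<cdot> (F X (d X) \<otimes> F X (kterm C X)) = F (bp X X) ?K \<cdot> mi X zo"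
    using seely_nat_inv[of "d X" "kterm C X" X X] by (simp del: F_kid)
  have 3: "F X (kdiag C X) \<cdot> ?K = kpair C X zo (d X) (kterm C X)"
    by (subst kcomp_kprod) simp_all
  have "c X \<cdot> (I (bg X) \<otimes> w X) = F X (kdiag C X) \<cdot> (mi X X \<cdot> (F X (d X) \<otimes> F X (kterm C X))) \<cdot> (I (bg X) \<otimes> m0i)"
    unfolding 1 c_def' by (simp del: F_kid)
  also have "\<dots> = F X (kdiag C X) \<cdot> (F (bp X X) ?K \<cdot> mi X zo) \<cdot> (I (bg X) \<otimes> m0i)" by (simp only: 2)
  also have "\<dots> = (F X (kdiag C X) \<cdot> F (bp X X) ?K) \<cdot> (mi X zo \<cdot> (I (bg X) \<otimes> m0i))" by simp
  also have "\<dots> = (F X (kdiag C X) \<cdot> F (bp X X) ?K) \<cdot> F (bp X zo) (kpi1 C X zo)" by (simp only: unit_inv1)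
  also have "\<dots> = F X (F X (F X (kdiag C X) \<cdot> ?K) \<cdot> kpi1 C X zo)"
    using F_cmp[of "kdiag C X" X ?K] F_cmp[of "F X (kdiag C X) \<cdot> ?K" X "kpi1 C X zo"] by (simp del: F_pi)
  also have "\<dots> = I (bg X)" unfolding 3 by (simp add: F_kpi)
  finally show ?thesis .
qed

end


context dsc begin

lemma merge: "f \<in> ar \<Longrightarrow> g \<in> ar \<Longrightarrow> f' \<in> ar \<Longrightarrow> g' \<in> ar \<Longrightarrow> cd f = dm g \<Longrightarrow> cd f' = dm g' \<Longrightarrow>
   (f \<otimes> f') \<cdot> (g \<otimes> g') = (f \<cdot> g) \<otimes> (f' \<cdot> g')" by (simp add: interchange)
lemma merge_tail: "f \<in> ar \<Longrightarrow> g \<in> ar \<Longrightarrow> f' \<in> ar \<Longrightarrow> g' \<in> ar \<Longrightarrow> h \<in> ar \<Longrightarrow> cd f = dm g \<Longrightarrow> cd f' = dm g' \<Longrightarrow>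
   dm h = ten (cd g) (cd g') \<Longrightarrow> (f \<otimes> f') \<cdot> (g \<otimes> g') \<cdot> h = ((f \<cdot> g) \<otimes> (f' \<cdot> g')) \<cdot> h"
  by (subst tail[OF merge]) auto

lemma mi_c: "mi X Y = c (bp X Y) \<cdot> (bm (pr1 X Y) \<otimes> bm (pr2 X Y))"
proof -
  let ?P = "bp X Y"
  let ?K = "kprod C ?P ?P X Y (kpi1 C X Y) (kpi2 C X Y)"
  have 2: "mi ?P ?P \<cdot> (F ?P (kpi1 C X Y) \<otimes> F ?P (kpi2 C X Y)) = F (bp ?P ?P) ?K \<cdot> mi X Y"
    using seely_nat_inv[of "kpi1 C X Y" "kpi2 C X Y" ?P ?P] by (simp del: F_pi)
  have 3: "F ?P (kdiag C ?P) \<cdot> ?K = kpair C X Y (kpi1 C X Y) (kpi2 C X Y)"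
    by (subst kcomp_kprod) simp_all
  have 4: "kpair C X Y (kpi1 C X Y) (kpi2 C X Y) = d ?P"
    by (rule bp_ext[of _ _ X Y]) (simp_all add: kpi_def')
  have "c ?P \<cdot> (bm (pr1 X Y) \<otimes> bm (pr2 X Y)) = F ?P (kdiag C ?P) \<cdot> (mi ?P ?P \<cdot> (F ?P (kpi1 C X Y) \<otimes> F ?P (kpi2 C X Y)))"
    by (simp add: c_def')
  also have "\<dots> = (F ?P (kdiag C ?P) \<cdot> F (bp ?P ?P) ?K) \<cdot> mi X Y" by (simp only: 2) simp
  also have "\<dots> = mi X Y" using F_cmp[of "kdiag C ?P" ?P ?K] by (simp add: 3 4)
  finally show ?thesis by simp
qed


lemma key_inner1: "(I (bg (bp X A)) \<otimes> in2 X A) \<cdot> df (bp X A) \<cdot> bm (pr2 X A) \<cdot> d A = w (bp X A) \<otimes> I A"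
proof -
  have n: "df (bp X A) \<cdot> bm (pr2 X A) = (bm (pr2 X A) \<otimes> pr2 X A) \<cdot> df A"
    using df_nat[of "pr2 X A"] by simp
  have "(I (bg (bp X A)) \<otimes> in2 X A) \<cdot> df (bp X A) \<cdot> bm (pr2 X A) \<cdot> d A
      = ((I (bg (bp X A)) \<otimes> in2 X A) \<cdot> (bm (pr2 X A) \<otimes> pr2 X A)) \<cdot> (df A \<cdot> d A)"
    by (subst tail[OF n]) simp_all
  also have "\<dots> = (bm (pr2 X A) \<otimes> I A) \<cdot> (w A \<otimes> I A)" by (simp add: merge df_d)
  also have "\<dots> = (F (bp X A) (kpi2 C X A) \<cdot> w A) \<otimes> I A" by (simp add: merge)
  also have "\<dots> = w (bp X A) \<otimes> I A" using w_nat[of "kpi2 C X A" "bp X A"] by (simp del: F_pi)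
  finally show ?thesis .
qed

lemma key_inner2: "(I (bg (bp X A)) \<otimes> in2 X A) \<cdot> df (bp X A) \<cdot> bm (pr1 X A) = Z (ten (bg (bp X A)) A) (bg X)"
proof -
  have n: "df (bp X A) \<cdot> bm (pr1 X A) = (bm (pr1 X A) \<otimes> pr1 X A) \<cdot> df X"
    using df_nat[of "pr1 X A"] by simp
  have "(I (bg (bp X A)) \<otimes> in2 X A) \<cdot> df (bp X A) \<cdot> bm (pr1 X A)
      = ((I (bg (bp X A)) \<otimes> in2 X A) \<cdot> (bm (pr1 X A) \<otimes> pr1 X A)) \<cdot> df X"
    by (simp add: n)
  also have "\<dots> = Z (ten (bg (bp X A)) A) (bg X)" by (simp add: merge)
  finally show ?thesis .
qed

lemma key: "(I (bg (bp X A)) \<otimes> in2 X A) \<cdot> df (bp X A) \<cdot> mi X A \<cdot> (I (bg X) \<otimes> d A)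
   = bm (pr1 X A) \<otimes> I A"
proof -
  define P where "P = bp X A"
  define B where "B = bg P"
  define R where "R = bm (pr1 X A) \<otimes> (bm (pr2 X A) \<cdot> d A)"
  define J where "J = I B \<otimes> (I B \<otimes> in2 X A)"
  define T1 where "T1 = I B \<otimes> df P"
  define T2 where "T2 = (I B \<otimes> sy B P) \<cdot> (df P \<otimes> I B)"
  have ty: "R \<in> ar" "dm R = ten B B" "cd R = ten (bg X) A" "J \<in> ar" "dm J = ten B (ten B A)" "cd J = ten B (ten B P)"
    "T1 \<in> ar" "dm T1 = ten B (ten B P)" "cd T1 = ten B B"
    "T2 \<in> ar" "dm T2 = ten B (ten B P)" "cd T2 = ten B B"
    by (simp_all add: R_def J_def T1_def T2_def B_def P_def)
  have S1: "(I B \<otimes> in2 X A) \<cdot> df P \<cdot> mi X A \<cdot> (I (bg X) \<otimes> d A) = (I B \<otimes> in2 X A) \<cdot> (df P \<cdot> c P) \<cdot> R"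
    by (simp add: mi_c R_def merge P_def B_def)
  have S3: "(I B \<otimes> in2 X A) \<cdot> (c P \<otimes> I P) = (c P \<otimes> I A) \<cdot> J"
  proof -
    have j: "J = I (ten B B) \<otimes> in2 X A" using tm_assoc[of "I B" "I B" "in2 X A"] by (simp add: J_def)
    show ?thesis unfolding j by (simp add: merge B_def P_def)
  qed
  have S5: "J \<cdot> T1 \<cdot> R = bm (pr1 X A) \<otimes> (w P \<otimes> I A)"
  proof -
    have "J \<cdot> T1 \<cdot> R = (I B \<otimes> ((I B \<otimes> in2 X A) \<cdot> df P)) \<cdot> R"
      by (simp add: J_def T1_def merge_tail B_def P_def R_def)
    also have "\<dots> = bm (pr1 X A) \<otimes> ((I B \<otimes> in2 X A) \<cdot> df P \<cdot> bm (pr2 X A) \<cdot> d A)"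
      by (simp add: R_def merge B_def P_def)
    also have "\<dots> = bm (pr1 X A) \<otimes> (w P \<otimes> I A)" by (simp only: B_def P_def key_inner1)
    finally show ?thesis .
  qed
  have S6: "J \<cdot> T2 \<cdot> R = Z (ten B (ten B A)) (ten (bg X) A)"
  proof -
    have a: "J \<cdot> (I B \<otimes> sy B P) = (I B \<otimes> sy B A) \<cdot> (I B \<otimes> (in2 X A \<otimes> I B))"
    proof -
      have "J \<cdot> (I B \<otimes> sy B P) = I B \<otimes> ((I B \<otimes> in2 X A) \<cdot> sy B P)"
        by (simp add: J_def merge B_def P_def)
      also have "(I B \<otimes> in2 X A) \<cdot> sy B P = sy B A \<cdot> (in2 X A \<otimes> I B)"
        using sym_nat[of "I B" "in2 X A"] by (simp add: P_def)
      finally show ?thesis by (simp add: merge B_def P_def)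
    qed
    have b: "(I B \<otimes> (in2 X A \<otimes> I B)) \<cdot> (df P \<otimes> I B) \<cdot> R = ((I B \<otimes> in2 X A) \<cdot> df P \<cdot> bm (pr1 X A)) \<otimes> (bm (pr2 X A) \<cdot> d A)"
    proof -
      have m1: "((I B \<otimes> in2 X A) \<otimes> I B) \<cdot> (df P \<otimes> I B) = ((I B \<otimes> in2 X A) \<cdot> df P) \<otimes> (I B \<cdot> I B)"
        by (rule merge) (simp_all add: B_def P_def)
      from m1 have m2: "(I B \<otimes> (in2 X A \<otimes> I B)) \<cdot> (df P \<otimes> I B) = ((I B \<otimes> in2 X A) \<cdot> df P) \<otimes> I B"
        by simp
      have "(I B \<otimes> (in2 X A \<otimes> I B)) \<cdot> (df P \<otimes> I B) \<cdot> R = ((I B \<otimes> (in2 X A \<otimes> I B)) \<cdot> (df P \<otimes> I B)) \<cdot> R"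
        by (simp add: R_def B_def P_def del: tm_assoc)
      also have "\<dots> = (((I B \<otimes> in2 X A) \<cdot> df P) \<otimes> I B) \<cdot> R" by (simp only: m2)
      also have "\<dots> = ((I B \<otimes> in2 X A) \<cdot> df P \<cdot> bm (pr1 X A)) \<otimes> (bm (pr2 X A) \<cdot> d A)"
        by (simp add: R_def merge B_def P_def)
      finally show ?thesis .
    qed
    have "J \<cdot> T2 \<cdot> R = (J \<cdot> (I B \<otimes> sy B P)) \<cdot> (df P \<otimes> I B) \<cdot> R"
      by (simp add: T2_def J_def R_def B_def P_def)
    also have "\<dots> = (I B \<otimes> sy B A) \<cdot> ((I B \<otimes> (in2 X A \<otimes> I B)) \<cdot> (df P \<otimes> I B) \<cdot> R)"
      unfolding a by (simp add: B_def P_def R_def del: tm_assoc)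
    also have "\<dots> = (I B \<otimes> sy B A) \<cdot> (((I B \<otimes> in2 X A) \<cdot> df P \<cdot> bm (pr1 X A)) \<otimes> (bm (pr2 X A) \<cdot> d A))"
      by (simp only: b)
    also have "\<dots> = Z (ten B (ten B A)) (ten (bg X) A)" by (simp only: B_def P_def key_inner2) simp
    finally show ?thesis .
  qed
  have S7: "(c P \<otimes> I A) \<cdot> (bm (pr1 X A) \<otimes> (w P \<otimes> I A)) = bm (pr1 X A) \<otimes> I A"
  proof -
    have e1: "bm (pr1 X A) \<otimes> w P = (I B \<otimes> w P) \<cdot> bm (pr1 X A)"
      using merge[of "I B" "bm (pr1 X A)" "w P" "I one"] by (simp add: B_def P_def)
    have e2: "c P \<cdot> (bm (pr1 X A) \<otimes> w P) = bm (pr1 X A)" unfolding e1 by (simp add: B_def P_def)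
    have "(c P \<otimes> I A) \<cdot> (bm (pr1 X A) \<otimes> (w P \<otimes> I A)) = (c P \<otimes> I A) \<cdot> ((bm (pr1 X A) \<otimes> w P) \<otimes> I A)"
      by (simp add: B_def P_def)
    also have "\<dots> = (c P \<cdot> (bm (pr1 X A) \<otimes> w P)) \<otimes> (I A \<cdot> I A)"
      by (rule merge) (simp_all add: B_def P_def)
    also have "\<dots> = (c P \<cdot> (bm (pr1 X A) \<otimes> w P)) \<otimes> I A" by simp
    finally show ?thesis by (simp only: e2)
  qed
  have "(I B \<otimes> in2 X A) \<cdot> df P \<cdot> mi X A \<cdot> (I (bg X) \<otimes> d A) = ((I B \<otimes> in2 X A) \<cdot> (c P \<otimes> I P)) \<cdot> (T1 \<oplus> T2) \<cdot> R"
    unfolding S1 using df_c[of P] ty by (simp add: T1_def T2_def B_def P_def)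
  also have "\<dots> = (c P \<otimes> I A) \<cdot> (J \<cdot> (T1 \<oplus> T2) \<cdot> R)" unfolding S3 using ty by (simp add: B_def P_def)
  also have "J \<cdot> (T1 \<oplus> T2) \<cdot> R = J \<cdot> T1 \<cdot> R \<oplus> J \<cdot> T2 \<cdot> R" using ty by (simp add: distr_l distr_r)
  also have "\<dots> = bm (pr1 X A) \<otimes> (w P \<otimes> I A)" unfolding S5 S6 by (simp add: B_def P_def)
  finally show ?thesis using S7 by (simp add: B_def P_def)
qed
end


context dsc begin

lemma GL: assumes "k1 \<in> ar" "dm k1 = bg Q" "k2 \<in> ar" "dm k2 = ten (bg Q) R" "g \<in> ar" "dm g = A" "cd g = R"
  shows "lscomp C (Q, A) (d Q, w Q \<otimes> g) (k1, k2) = (k1, (I (bg Q) \<otimes> g) \<cdot> k2)"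
proof -
  have e: "(c Q \<otimes> I A) \<cdot> ((I (bg Q) \<otimes> w Q) \<otimes> g) = (c Q \<cdot> (I (bg Q) \<otimes> w Q)) \<otimes> (I A \<cdot> g)"
    using assms by (intro merge) simp_all
  have "(c Q \<otimes> I A) \<cdot> (I (bg Q) \<otimes> (w Q \<otimes> g)) = I (bg Q) \<otimes> g"
    using e assms by simp
  then show ?thesis using assms by (simp add: lscomp_def kcomp_F tail)
qed

lemma GR: assumes "k1 \<in> ar" "dm k1 = bg Q" "cd k1 = Y" "k2 \<in> ar" "dm k2 = ten (bg Q) A"
  "g1 \<in> ar" "dm g1 = Y" "g \<in> ar" "dm g = cd k2"
  shows "lscomp C (Q, A) (k1, k2) (d Y \<cdot> g1, w Y \<otimes> g) = (k1 \<cdot> g1, k2 \<cdot> g)"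
proof -
  have e1: "(F Q k1 \<otimes> k2) \<cdot> (w Y \<otimes> g) = w Q \<otimes> (k2 \<cdot> g)"
    using assms merge[of "F Q k1" "w Y" k2 g] w_nat[of k1 Q] by simp
  have e2: "(w Q \<otimes> I (ten (bg Q) A)) \<cdot> (I one \<otimes> (k2 \<cdot> g)) = (w Q \<cdot> I one) \<otimes> (I (ten (bg Q) A) \<cdot> (k2 \<cdot> g))"
    using assms by (intro merge) simp_all
  have e3: "(c Q \<otimes> I A) \<cdot> ((w Q \<otimes> I (bg Q)) \<otimes> I A) = (c Q \<cdot> (w Q \<otimes> I (bg Q))) \<otimes> (I A \<cdot> I A)"
    by (intro merge) simp_all
  have "((c Q \<otimes> I A) \<cdot> (F Q k1 \<otimes> k2)) \<cdot> (w Y \<otimes> g) = (c Q \<otimes> I A) \<cdot> (w Q \<otimes> (k2 \<cdot> g))"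
    using assms e1 by (simp del: tm_assoc)
  also have "\<dots> = ((c Q \<otimes> I A) \<cdot> (w Q \<otimes> I (ten (bg Q) A))) \<cdot> (k2 \<cdot> g)"
    using assms e2 by simp
  also have "\<dots> = k2 \<cdot> g" using assms e3 by simp
  finally have "((c Q \<otimes> I A) \<cdot> (F Q k1 \<otimes> k2)) \<cdot> (w Y \<otimes> g) = k2 \<cdot> g" .
  moreover have "kcomp C Q k1 (d Y \<cdot> g1) = k1 \<cdot> g1" using assms by (simp add: kcomp_F)
  ultimately show ?thesis by (simp add: lscomp_def)
qed

lemma GR0: assumes "k1 \<in> ar" "dm k1 = bg Q" "cd k1 = Y" "k2 \<in> ar" "dm k2 = ten (bg Q) A"
  "g \<in> ar" "dm g = cd k2"
  shows "lscomp C (Q, A) (k1, k2) (d Y, w Y \<otimes> g) = (k1, k2 \<cdot> g)"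
  using GR[OF assms(1-5), of "I Y" g] assms by simp


definition "Tob = (\<lambda>X. (X, X))"
definition "Tar = (\<lambda>X Y f. (f, df X \<cdot> f))"

lemma T_functor: "is_T_functor C Tob Tar"
  unfolding is_T_functor_def
proof (intro conjI allI impI)
  fix X Y f assume "f \<in> hom C (bg X) Y"
  then show "Tar X Y f \<in> LShom C (Tob X) (Tob Y)" by (simp add: Tar_def Tob_def LShom_def hom_iff)
next
  fix X show "Tar X X (kid C X) = lsid C (Tob X)" by (simp add: Tar_def Tob_def lsid_def kid_def df_d)
next
  fix X Y Z f g assume f: "f \<in> hom C (bg X) Y" and g: "g \<in> hom C (bg Y) Z"
  have n: "df (bg X) \<cdot> bm f = (bm f \<otimes> f) \<cdot> df Y" using df_nat[of f] f by (simp add: hom_iff)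
  have m: "(p X \<otimes> df X) \<cdot> (bm f \<otimes> f) = F X f \<otimes> (df X \<cdot> f)"
    using f by (simp add: merge hom_iff F_def')
  have "df X \<cdot> F X f \<cdot> g = ((c X \<otimes> I X) \<cdot> (p X \<otimes> df X)) \<cdot> (df (bg X) \<cdot> bm f) \<cdot> g"
    using f g by (simp add: hom_iff F_def' tail[OF df_p[of X]])
  also have "\<dots> = (c X \<otimes> I X) \<cdot> ((p X \<otimes> df X) \<cdot> (bm f \<otimes> f)) \<cdot> df Y \<cdot> g"
    unfolding n using f g by (simp add: hom_iff)
  also have "\<dots> = ((c X \<otimes> I X) \<cdot> (F X f \<otimes> (df X \<cdot> f))) \<cdot> (df Y \<cdot> g)"
    unfolding m using f g by (simp add: hom_iff)
  finally show "Tar X Z (kcomp C X f g) = lscomp C (Tob X) (Tar X Y f) (Tar Y Z g)"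
    using f by (simp add: Tar_def Tob_def lscomp_def kcomp_F hom_iff)
qed

lemma lsid_ty: "lsid C (Q, Q) \<in> LShom C (Q, Q) (Q, Q)" by (simp add: lsid_def kid_def LShom_def hom_iff)

lemma lsid_left: "k \<in> LShom C (Q, Q) (Q', R) \<Longrightarrow> lscomp C (Q, Q) (lsid C (Q, Q)) k = k"
  by (cases k) (simp add: lsid_def kid_def LShom_def hom_iff GL)

lemma phi_lsid: "phi C Tob Tar X Y = lsid C (bp X Y, bp X Y)"
proof -
  let ?Q = "bp X Y"
  have p1: "Tar ?Q X (kpi1 C X Y) = lsproj1 C (X, X) (Y, Y)"
    using merge[of "w ?Q" "I one" "I ?Q" "pr1 X Y"]
    by (simp add: Tar_def lsproj1_def kpi_def' tail[OF df_d[of ?Q]])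
  have p2: "Tar ?Q Y (kpi2 C X Y) = lsproj2 C (X, X) (Y, Y)"
    using merge[of "w ?Q" "I one" "I ?Q" "pr2 X Y"]
    by (simp add: Tar_def lsproj2_def kpi_def' tail[OF df_d[of ?Q]])
  have ob: "lsprodob C (X, X) (Y, Y) = (?Q, ?Q)" by (simp add: lsprodob_def)
  have pr: "lsproj1 C (X, X) (Y, Y) = (d ?Q \<cdot> pr1 X Y, w ?Q \<otimes> pr1 X Y)"
           "lsproj2 C (X, X) (Y, Y) = (d ?Q \<cdot> pr2 X Y, w ?Q \<otimes> pr2 X Y)"
    by (simp_all add: lsproj1_def lsproj2_def kpi_def')
  have w1: "w ?Q \<otimes> pr1 X Y = (w ?Q \<otimes> I ?Q) \<cdot> pr1 X Y" "w ?Q \<otimes> pr2 X Y = (w ?Q \<otimes> I ?Q) \<cdot> pr2 X Y"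
    using merge[of "w ?Q" "I one" "I ?Q" "pr1 X Y"] merge[of "w ?Q" "I one" "I ?Q" "pr2 X Y"] by simp_all
  have "(THE h. h \<in> LShom C (?Q, ?Q) (?Q, ?Q) \<and> lscomp C (?Q, ?Q) h (lsproj1 C (X, X) (Y, Y)) = lsproj1 C (X, X) (Y, Y)
        \<and> lscomp C (?Q, ?Q) h (lsproj2 C (X, X) (Y, Y)) = lsproj2 C (X, X) (Y, Y)) = lsid C (?Q, ?Q)"
  proof (rule the1_equality)
    show "\<exists>!h. h \<in> LShom C (?Q, ?Q) (?Q, ?Q) \<and> lscomp C (?Q, ?Q) h (lsproj1 C (X, X) (Y, Y)) = lsproj1 C (X, X) (Y, Y)
        \<and> lscomp C (?Q, ?Q) h (lsproj2 C (X, X) (Y, Y)) = lsproj2 C (X, X) (Y, Y)"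
    proof (rule ex1I[of _ "lsid C (?Q, ?Q)"])
      show "lsid C (?Q, ?Q) \<in> LShom C (?Q, ?Q) (?Q, ?Q) \<and> lscomp C (?Q, ?Q) (lsid C (?Q, ?Q)) (lsproj1 C (X, X) (Y, Y)) = lsproj1 C (X, X) (Y, Y)
        \<and> lscomp C (?Q, ?Q) (lsid C (?Q, ?Q)) (lsproj2 C (X, X) (Y, Y)) = lsproj2 C (X, X) (Y, Y)"
        using lsid_ty[of ?Q] by (simp add: pr lsid_left LShom_def hom_iff)
    next
      fix h assume h: "h \<in> LShom C (?Q, ?Q) (?Q, ?Q) \<and> lscomp C (?Q, ?Q) h (lsproj1 C (X, X) (Y, Y)) = lsproj1 C (X, X) (Y, Y)
        \<and> lscomp C (?Q, ?Q) h (lsproj2 C (X, X) (Y, Y)) = lsproj2 C (X, X) (Y, Y)"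
      obtain h1 h2 where hh: "h = (h1, h2)" by (cases h)
      have ty: "h1 \<in> ar" "dm h1 = bg ?Q" "cd h1 = ?Q" "h2 \<in> ar" "dm h2 = ten (bg ?Q) ?Q" "cd h2 = ?Q"
        using h hh by (auto simp: LShom_def hom_iff)
      have c1: "lscomp C (?Q, ?Q) h (lsproj1 C (X, X) (Y, Y)) = (h1 \<cdot> pr1 X Y, h2 \<cdot> pr1 X Y)"
        unfolding hh pr using ty by (intro GR) simp_all
      have c2: "lscomp C (?Q, ?Q) h (lsproj2 C (X, X) (Y, Y)) = (h1 \<cdot> pr2 X Y, h2 \<cdot> pr2 X Y)"
        unfolding hh pr using ty by (intro GR) simp_all
      have e1: "h1 \<cdot> pr1 X Y = d ?Q \<cdot> pr1 X Y" "h2 \<cdot> pr1 X Y = (w ?Q \<otimes> I ?Q) \<cdot> pr1 X Y"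
        using h c1 unfolding pr w1 by auto
      have e2: "h1 \<cdot> pr2 X Y = d ?Q \<cdot> pr2 X Y" "h2 \<cdot> pr2 X Y = (w ?Q \<otimes> I ?Q) \<cdot> pr2 X Y"
        using h c2 unfolding pr w1 by auto
      have "h1 = d ?Q" by (rule bp_ext[of _ _ X Y]) (use ty e1 e2 in simp_all)
      moreover have "h2 = w ?Q \<otimes> I ?Q" by (rule bp_ext[of _ _ X Y]) (use ty e1 e2 in simp_all)
      ultimately show "h = lsid C (?Q, ?Q)" by (simp add: hh lsid_def kid_def)
    qed
    show "lsid C (?Q, ?Q) \<in> LShom C (?Q, ?Q) (?Q, ?Q) \<and> lscomp C (?Q, ?Q) (lsid C (?Q, ?Q)) (lsproj1 C (X, X) (Y, Y)) = lsproj1 C (X, X) (Y, Y)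
        \<and> lscomp C (?Q, ?Q) (lsid C (?Q, ?Q)) (lsproj2 C (X, X) (Y, Y)) = lsproj2 C (X, X) (Y, Y)"
      using lsid_ty[of ?Q] by (simp add: pr lsid_left LShom_def hom_iff)
  qed
  then show ?thesis unfolding phi_def lspair_def p1 p2 by (simp add: Tob_def ob)
qed

lemma lsinv_lsid: "lsinv C (Q, Q) (Q, Q) (lsid C (Q, Q)) = lsid C (Q, Q)"
  unfolding lsinv_def
proof (rule the1_equality)
  show "\<exists>!k. k \<in> LShom C (Q, Q) (Q, Q) \<and> lscomp C (Q, Q) (lsid C (Q, Q)) k = lsid C (Q, Q) \<and> lscomp C (Q, Q) k (lsid C (Q, Q)) = lsid C (Q, Q)"
    by (rule ex1I[of _ "lsid C (Q, Q)"]) (auto simp: lsid_ty lsid_left lsid_left[OF lsid_ty])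
  show "lsid C (Q, Q) \<in> LShom C (Q, Q) (Q, Q) \<and> lscomp C (Q, Q) (lsid C (Q, Q)) (lsid C (Q, Q)) = lsid C (Q, Q) \<and> lscomp C (Q, Q) (lsid C (Q, Q)) (lsid C (Q, Q)) = lsid C (Q, Q)"
    by (auto simp: lsid_ty lsid_left lsid_left[OF lsid_ty])
qed

lemma i2_eq: "i2 C Tob Tar X Y = (d (bp X Y), w (bp X Y) \<otimes> in2 X Y)"
proof -
  have "i2 C Tob Tar X Y = lscomp C (bp X Y, Y) (d (bp X Y), w (bp X Y) \<otimes> in2 X Y) (lsid C (bp X Y, bp X Y))"
    unfolding i2_def phi_lsid by (simp add: Tob_def kid_def lsinv_lsid)
  also have "\<dots> = (d (bp X Y), (w (bp X Y) \<otimes> in2 X Y) \<cdot> I (bp X Y))"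
    unfolding lsid_def kid_def fst_conv snd_conv by (rule GR0) simp_all
  finally show ?thesis by simp
qed

lemma nlax_eq: "nlax C X A = mi X A \<cdot> (d X \<otimes> d A)"
  by (simp add: nlax_def eta_def Um_def kcomp_F)

lemma bracket_eq: assumes "f \<in> ar" "dm f = bg X" "cd f = Y" "u \<in> ar" "dm u = ten (bg X) A" "cd u = B"
  shows "bracket C X A Y B f u = kpair C Y B (bm (pr1 X A) \<cdot> f) (mi X A \<cdot> (I (bg X) \<otimes> d A) \<cdot> u)"
proof -
  let ?K = "kprod C X A (bg X) A (I (bg X)) (d A)"
  have s: "mi X A \<cdot> (F X (I (bg X)) \<otimes> F A (d A)) = F (bp X A) ?K \<cdot> mi (bg X) A"
    using seely_nat_inv[of "I (bg X)" "d A" X A] by (simp del: F_kid F_eta)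
  have s2: "F (bp X A) ?K \<cdot> mi (bg X) A \<cdot> (d (bg X) \<otimes> d A) = mi X A \<cdot> (I (bg X) \<otimes> d A)"
  proof -
    have "F (bp X A) ?K \<cdot> mi (bg X) A \<cdot> (d (bg X) \<otimes> d A) = (F (bp X A) ?K \<cdot> mi (bg X) A) \<cdot> (d (bg X) \<otimes> d A)"
      by (simp del: F_kid F_eta)
    also have "\<dots> = mi X A \<cdot> ((p X \<otimes> I (bg A)) \<cdot> (d (bg X) \<otimes> d A))" unfolding s[symmetric] by simp
    also have "\<dots> = mi X A \<cdot> (I (bg X) \<otimes> d A)" by (simp add: merge)
    finally show ?thesis .
  qed
  show ?thesis using assms s2
    by (simp add: bracket_def kcomp_F nlax_eq Um_def eta_def kid_def)
qed

lemma t3: assumes "(f, u) \<in> LShom C (X, A) (Y, B)"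
  shows "lscomp C (bp X A, A) (Wm C X A Y B f u) (i2 C Tob Tar Y B) =
       lscomp C (bp X A, snd (Tob A)) (i2 C Tob Tar X A) (Tar (bp X A) (bp Y B) (bracket C X A Y B f u))"
proof -
  have ty: "f \<in> ar" "dm f = bg X" "cd f = Y" "u \<in> ar" "dm u = ten (bg X) A" "cd u = B"
    using assms by (auto simp: LShom_def hom_iff)
  let ?br = "kpair C Y B (bm (pr1 X A) \<cdot> f) (mi X A \<cdot> (I (bg X) \<otimes> d A) \<cdot> u)"
  have br: "bracket C X A Y B f u = ?br" using ty by (rule bracket_eq)
  have Wm: "Wm C X A Y B f u = (?br, (bm (pr1 X A) \<otimes> I A) \<cdot> u)"
    unfolding Wm_def br by simp
  have L: "lscomp C (bp X A, A) (Wm C X A Y B f u) (i2 C Tob Tar Y B) = (?br, ((bm (pr1 X A) \<otimes> I A) \<cdot> u) \<cdot> in2 Y B)"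
    unfolding Wm i2_eq using ty by (intro GR0) simp_all
  have R: "lscomp C (bp X A, snd (Tob A)) (i2 C Tob Tar X A) (Tar (bp X A) (bp Y B) (bracket C X A Y B f u))
        = (?br, (I (bg (bp X A)) \<otimes> in2 X A) \<cdot> (df (bp X A) \<cdot> ?br))"
    unfolding i2_eq br unfolding Tar_def Tob_def snd_conv using ty by (intro GL) simp_all
  let ?H = "(I (bg (bp X A)) \<otimes> in2 X A) \<cdot> df (bp X A)"
  have kL: "?H \<cdot> mi X A \<cdot> (I (bg X) \<otimes> d A) = bm (pr1 X A) \<otimes> I A" using key[of X A] by simp
  have k2L: "?H \<cdot> bm (pr1 X A) = Z (ten (bg (bp X A)) A) (bg X)" using key_inner2[of X A] by simp
  have "(I (bg (bp X A)) \<otimes> in2 X A) \<cdot> (df (bp X A) \<cdot> ?br) = ?H \<cdot> ?br" using ty by simp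
  also have "\<dots> = (?H \<cdot> bm (pr1 X A)) \<cdot> f \<cdot> in1 Y B \<oplus> (?H \<cdot> mi X A \<cdot> (I (bg X) \<otimes> d A)) \<cdot> u \<cdot> in2 Y B"
    using ty by (simp add: kpair_def' distr_l)
  also have "\<dots> = ((bm (pr1 X A) \<otimes> I A) \<cdot> u) \<cdot> in2 Y B"
    using ty by (simp only: kL k2L) simp
  finally show ?thesis using L R by simp
qed

end

theorem theorem4p7:
  fixes C :: "('o, 'a) dsc_data"
  assumes "differential_seely_category C"
  shows "coKleisli_is_GDSC C"
proof -
  interpret dsc C by (unfold_locales) (rule assms)
  have t1: "axiom_t1 C Tob Tar"
    unfolding axiom_t1_def
  proof (intro conjI allI impI)
    show "\<And>X. fst (Tob X) = X" by (simp add: Tob_def)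
    show "\<And>X Y f. fst (Tar X Y f) = f" by (simp add: Tar_def)
    fix X Y
    show "lsiso C (Tob (bp X Y)) (bp X Y, bp (snd (Tob X)) (snd (Tob Y))) (phi C Tob Tar X Y)"
      unfolding phi_lsid unfolding lsiso_def Tob_def snd_conv using lsid_ty lsid_left[OF lsid_ty] by auto
  qed
  have t2: "axiom_t2 C Tob" by (simp add: axiom_t2_def Tob_def)
  have t3': "axiom_t3 C Tob Tar" unfolding axiom_t3_def using t3 by blast
  show ?thesis unfolding coKleisli_is_GDSC_def using T_functor t1 t2 t3' by blast
qed


end
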